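(* Let $(M^n,g)$, $n\ge3$, be a Riemannian manifold, $f,V\in C^\infty(M)$, $\widetilde g=e^{-\frac2{n-1}f}g$ and $u=e^{-\frac{f}{n-1}}V$. Then $$\widetilde\Delta u=e^{-\frac f{n-1}}\Big(\tfrac12F^*_f(V)+\tfrac12VS_f\Big),\qquad \widetilde\nabla^2u-u\,\widetilde{\mathrm{Ric}}=e^{\frac f{n-1}}\Big(F^*_g(V)+\tfrac12F^*_f(V)\,g\Big),$$ where $\widetilde\Delta,\widetilde\nabla^2,\widetilde{\mathrm{Ric}}$ are the Laplacian, Hessian and Ricci tensor of $\widetilde g$, and $$F^*_g(V)_{ij}=\nabla_i\nabla_jV-(\Delta V)g_{ij}+\langle\nabla V,\nabla f\rangle g_{ij}-V\Big(\mathrm{Ric}_{ij}+\nabla_i\nabla_jf+\tfrac1{n-1}\nabla_if\nabla_jf\Big)+\tfrac12VS_fg_{ij},$$ $$F^*_f(V)=2\Delta V-\tfrac{2n}{n-1}\langle\nabla V,\nabla f\rangle-\tfrac2{n-1}V\Delta f+\tfrac2{n-1}V|\nabla f|^2-VS_f.$$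
   Context: All quantities without tilde are computed with respect to $g$; $\Delta=\nabla_i\nabla^i$; $S_f=R+2\Delta f-\frac{n-2}{n-1}|\nabla f|^2$ with $R$ the scalar curvature of $g$. *)

theory Defs
  imports "HOL-Analysis.Analysis"
begin

text \<open>Local-coordinate rendering of Riemannian geometry on an open set U of R^n.
  Points are vectors of type real^'n; a metric is a matrix field g.\<close>

definition pd :: "'n::finite \<Rightarrow> (real^'n \<Rightarrow> real) \<Rightarrow> real^'n \<Rightarrow> real" where
  "pd i F x = deriv (\<lambda>t. F (x + t *\<^sub>R axis i 1)) 0"

primrec ipd :: "'n::finite list \<Rightarrow> (real^'n \<Rightarrow> real) \<Rightarrow> real^'n \<Rightarrow> real" where
  "ipd [] F = F"
| "ipd (i # is) F = pd i (ipd is F)"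

definition smooth_on :: "(real^'n::finite) set \<Rightarrow> (real^'n \<Rightarrow> real) \<Rightarrow> bool" where
  "smooth_on U F \<longleftrightarrow> (\<forall>is. \<forall>x\<in>U. ipd is F differentiable (at x))"

definition riem_metric_on :: "(real^'n::finite) set \<Rightarrow> (real^'n \<Rightarrow> real^'n^'n) \<Rightarrow> bool" where
  "riem_metric_on U g \<longleftrightarrow>
     (\<forall>i j. smooth_on U (\<lambda>x. g x $ i $ j)) \<and>
     (\<forall>x\<in>U. \<forall>i j. g x $ i $ j = g x $ j $ i) \<and>
     (\<forall>x\<in>U. \<forall>v. v \<noteq> 0 \<longrightarrow> v \<bullet> (g x *v v) > 0)"

definition ginv :: "(real^'n::finite \<Rightarrow> real^'n^'n) \<Rightarrow> real^'n \<Rightarrow> 'n \<Rightarrow> 'n \<Rightarrow> real" where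
  "ginv g x i j = matrix_inv (g x) $ i $ j"

definition christ :: "(real^'n::finite \<Rightarrow> real^'n^'n) \<Rightarrow> 'n \<Rightarrow> 'n \<Rightarrow> 'n \<Rightarrow> real^'n \<Rightarrow> real" where
  "christ g k i j x = (1/2) * (\<Sum>l\<in>UNIV. ginv g x k l *
      (pd i (\<lambda>y. g y $ j $ l) x + pd j (\<lambda>y. g y $ i $ l) x - pd l (\<lambda>y. g y $ i $ j) x))"

definition ricci :: "(real^'n::finite \<Rightarrow> real^'n^'n) \<Rightarrow> 'n \<Rightarrow> 'n \<Rightarrow> real^'n \<Rightarrow> real" where
  "ricci g i j x =
     (\<Sum>k\<in>UNIV. pd k (christ g k i j) x) - (\<Sum>k\<in>UNIV. pd j (christ g k k i) x)
     + (\<Sum>k\<in>UNIV. \<Sum>l\<in>UNIV. christ g k k l x * christ g l i j x - christ g k j l x * christ g l k i x)"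

definition scal :: "(real^'n::finite \<Rightarrow> real^'n^'n) \<Rightarrow> real^'n \<Rightarrow> real" where
  "scal g x = (\<Sum>i\<in>UNIV. \<Sum>j\<in>UNIV. ginv g x i j * ricci g i j x)"

definition hess :: "(real^'n::finite \<Rightarrow> real^'n^'n) \<Rightarrow> (real^'n \<Rightarrow> real) \<Rightarrow> 'n \<Rightarrow> 'n \<Rightarrow> real^'n \<Rightarrow> real" where
  "hess g u i j x = pd i (pd j u) x - (\<Sum>k\<in>UNIV. christ g k i j x * pd k u x)"

definition lap :: "(real^'n::finite \<Rightarrow> real^'n^'n) \<Rightarrow> (real^'n \<Rightarrow> real) \<Rightarrow> real^'n \<Rightarrow> real" where
  "lap g u x = (\<Sum>i\<in>UNIV. \<Sum>j\<in>UNIV. ginv g x i j * hess g u i j x)"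

definition gip :: "(real^'n::finite \<Rightarrow> real^'n^'n) \<Rightarrow> (real^'n \<Rightarrow> real) \<Rightarrow> (real^'n \<Rightarrow> real) \<Rightarrow> real^'n \<Rightarrow> real" where
  "gip g a b x = (\<Sum>i\<in>UNIV. \<Sum>j\<in>UNIV. ginv g x i j * pd i a x * pd j b x)"

definition Sf :: "(real^'n::finite \<Rightarrow> real^'n^'n) \<Rightarrow> (real^'n \<Rightarrow> real) \<Rightarrow> real^'n \<Rightarrow> real" where
  "Sf g f x = scal g x + 2 * lap g f x
      - (real CARD('n) - 2) / (real CARD('n) - 1) * gip g f f x"

definition Fstar_g :: "(real^'n::finite \<Rightarrow> real^'n^'n) \<Rightarrow> (real^'n \<Rightarrow> real) \<Rightarrow> (real^'n \<Rightarrow> real)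
    \<Rightarrow> 'n \<Rightarrow> 'n \<Rightarrow> real^'n \<Rightarrow> real" where
  "Fstar_g g f V i j x =
     hess g V i j x - lap g V x * g x $ i $ j + gip g V f x * g x $ i $ j
     - V x * (ricci g i j x + hess g f i j x + 1 / (real CARD('n) - 1) * pd i f x * pd j f x)
     + (1/2) * V x * Sf g f x * g x $ i $ j"

definition Fstar_f :: "(real^'n::finite \<Rightarrow> real^'n^'n) \<Rightarrow> (real^'n \<Rightarrow> real) \<Rightarrow> (real^'n \<Rightarrow> real)
    \<Rightarrow> real^'n \<Rightarrow> real" where
  "Fstar_f g f V x =
     2 * lap g V x - 2 * real CARD('n) / (real CARD('n) - 1) * gip g V f x
     - 2 / (real CARD('n) - 1) * V x * lap g f x
     + 2 / (real CARD('n) - 1) * V x * gip g f f x - V x * Sf g f x"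

end

theory Submission
  imports Defs
begin

lemma line_deriv:
  fixes F :: "real^'n::finite \<Rightarrow> real"
  assumes "(F has_derivative F') (at (p + s *\<^sub>R v))"
  shows "((\<lambda>t. F (p + t *\<^sub>R v)) has_real_derivative F' v) (at s)"
proof -
  have l: "linear F'" using assms has_derivative_linear by blast
  have "((\<lambda>t. p + t *\<^sub>R v) has_derivative (\<lambda>h. h *\<^sub>R v)) (at s)"
    by (auto intro!: derivative_eq_intros)
  from has_derivative_compose[OF this assms]
  have "((\<lambda>t. F (p + t *\<^sub>R v)) has_derivative (\<lambda>h. F' (h *\<^sub>R v))) (at s)" by simp
  moreover have "(\<lambda>h. F' (h *\<^sub>R v)) = (\<lambda>h. F' v * h)"
    using l by (auto simp: linear_scale)
  ultimately show ?thesis by (simp add: has_field_derivative_def)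
qed

lemma pd_frechet:
  fixes F :: "real^'n::finite \<Rightarrow> real"
  assumes "(F has_derivative F') (at x)"
  shows "pd i F x = F' (axis i 1)"
  unfolding pd_def
  by (rule DERIV_imp_deriv, rule line_deriv) (use assms in simp)

lemma pd_DERIV:
  fixes F :: "real^'n::finite \<Rightarrow> real"
  assumes "F differentiable (at (p + s *\<^sub>R axis i 1))"
  shows "((\<lambda>t. F (p + t *\<^sub>R axis i 1)) has_real_derivative pd i F (p + s *\<^sub>R axis i 1)) (at s)"
proof -
  obtain F' where F': "(F has_derivative F') (at (p + s *\<^sub>R axis i 1))"
    using assms differentiable_def by blast
  show ?thesis using line_deriv[OF F'] pd_frechet[OF F'] by simp
qed

lemma pd_DERIV0:
  fixes F :: "real^'n::finite \<Rightarrow> real"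
  assumes "F differentiable (at x)"
  shows "((\<lambda>t. F (x + t *\<^sub>R axis i 1)) has_real_derivative pd i F x) (at 0)"
  using pd_DERIV[of F x 0 i] assms by simp

lemma pd_add:
  fixes F G :: "real^'n::finite \<Rightarrow> real"
  assumes "F differentiable (at x)" "G differentiable (at x)"
  shows "pd i (\<lambda>y. F y + G y) x = pd i F x + pd i G x"
  unfolding pd_def[of i "\<lambda>y. F y + G y"]
  by (rule DERIV_imp_deriv, rule DERIV_add; rule pd_DERIV0, fact)

lemma pd_diff:
  fixes F G :: "real^'n::finite \<Rightarrow> real"
  assumes "F differentiable (at x)" "G differentiable (at x)"
  shows "pd i (\<lambda>y. F y - G y) x = pd i F x - pd i G x"
  unfolding pd_def[of i "\<lambda>y. F y - G y"]
  by (rule DERIV_imp_deriv, rule DERIV_diff; rule pd_DERIV0, fact)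

lemma pd_mult:
  fixes F G :: "real^'n::finite \<Rightarrow> real"
  assumes "F differentiable (at x)" "G differentiable (at x)"
  shows "pd i (\<lambda>y. F y * G y) x = pd i F x * G x + F x * pd i G x"
proof -
  have "((\<lambda>t. F (x + t *\<^sub>R axis i 1) * G (x + t *\<^sub>R axis i 1)) has_real_derivative
     F (x + 0 *\<^sub>R axis i 1) * pd i G x + pd i F x * G (x + 0 *\<^sub>R axis i 1)) (at 0)"
    by (rule DERIV_mult'; rule pd_DERIV0, fact)
  then show ?thesis unfolding pd_def[of i "\<lambda>y. F y * G y"] by (simp add: DERIV_imp_deriv add.commute)
qed

lemma pd_const: "pd i (\<lambda>y. c) x = 0"
  unfolding pd_def by simp

lemma pd_cmult:
  fixes F :: "real^'n::finite \<Rightarrow> real"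
  assumes "F differentiable (at x)"
  shows "pd i (\<lambda>y. c * F y) x = c * pd i F x"
  using pd_mult[of "\<lambda>y. c" x F i] assms by (simp add: pd_const)

lemma pd_minus:
  fixes F :: "real^'n::finite \<Rightarrow> real"
  assumes "F differentiable (at x)"
  shows "pd i (\<lambda>y. - F y) x = - pd i F x"
  using pd_cmult[of F x i "-1"] assms by simp

lemma pd_sum:
  fixes F :: "'a \<Rightarrow> real^'n::finite \<Rightarrow> real"
  assumes "finite S" "\<And>a. a \<in> S \<Longrightarrow> F a differentiable (at x)"
  shows "pd i (\<lambda>y. \<Sum>a\<in>S. F a y) x = (\<Sum>a\<in>S. pd i (F a) x)"
  unfolding pd_def[of i "\<lambda>y. \<Sum>a\<in>S. F a y"]
  apply (rule DERIV_imp_deriv)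
  apply (rule DERIV_sum)
  using assms pd_DERIV0 by auto

lemma pd_exp:
  fixes F :: "real^'n::finite \<Rightarrow> real"
  assumes "F differentiable (at x)"
  shows "pd i (\<lambda>y. exp (F y)) x = exp (F x) * pd i F x"
proof -
  have "((\<lambda>t. exp (F (x + t *\<^sub>R axis i 1))) has_real_derivative
     exp (F (x + 0 *\<^sub>R axis i 1)) * pd i F x) (at 0)"
    by (rule DERIV_chain2[OF DERIV_exp pd_DERIV0[OF assms]])
  then show ?thesis unfolding pd_def[of i "\<lambda>y. exp (F y)"] by (simp add: DERIV_imp_deriv)
qed

lemma pd_cong:
  fixes F G :: "real^'n::finite \<Rightarrow> real"
  assumes "open S" "x \<in> S" "\<And>y. y \<in> S \<Longrightarrow> F y = G y"
  shows "pd i F x = pd i G x"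
proof -
  obtain e where e: "e > 0" "ball x e \<subseteq> S" using assms openE by blast
  have "\<forall>\<^sub>F t in nhds 0. F (x + t *\<^sub>R axis i 1) = G (x + t *\<^sub>R axis i 1)"
    unfolding eventually_nhds_metric
  proof (intro exI[of _ e] conjI allI impI)
    fix t :: real assume "dist t 0 < e"
    then have "x + t *\<^sub>R axis i 1 \<in> ball x e" by (simp add: dist_norm)
    then show "F (x + t *\<^sub>R axis i 1) = G (x + t *\<^sub>R axis i 1)" using e assms by auto
  qed (use e in auto)
  then show ?thesis unfolding pd_def by (rule deriv_cong_ev) simp
qed

lemma differentiable_cong:
  fixes F G :: "real^'n::finite \<Rightarrow> real"
  assumes "open S" "x \<in> S" "\<And>y. y \<in> S \<Longrightarrow> F y = G y" "G differentiable (at x)"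
  shows "F differentiable (at x)"
proof -
  obtain G' where "(G has_derivative G') (at x)" using assms differentiable_def by blast
  then have "(F has_derivative G') (at x)"
    by (rule has_derivative_transform_within_open[where s=S]) (use assms in auto)
  then show ?thesis using differentiable_def by blast
qed


lemma differentiable_prod_fin:
  fixes f :: "'a \<Rightarrow> real^'n::finite \<Rightarrow> real"
  assumes "finite S" "\<And>a. a \<in> S \<Longrightarrow> f a differentiable (at x)"
  shows "(\<lambda>y. \<Prod>a\<in>S. f a y) differentiable (at x)"
  using assms by (induction S rule: finite_induct) auto

lemma differentiable_det:
  fixes M :: "real^'n::finite \<Rightarrow> real^'n^'n"
  assumes "\<And>a b. (\<lambda>y. M y $ a $ b) differentiable (at x)"
  shows "(\<lambda>y. det (M y)) differentiable (at x)"
  unfolding det_def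
  by (intro differentiable_sum differentiable_mult differentiable_const differentiable_prod_fin ballI)
     (auto intro: assms)

lemma inv_props:
  fixes A :: "real^'n::finite^'n"
  assumes "invertible A"
  shows "A ** matrix_inv A = mat 1" "matrix_inv A ** A = mat 1"
proof -
  have "\<exists>A'. A ** A' = mat 1 \<and> A' ** A = mat 1" using assms invertible_def by blast
  then have "A ** matrix_inv A = mat 1 \<and> matrix_inv A ** A = mat 1"
    unfolding matrix_inv_def by (rule someI_ex)
  then show "A ** matrix_inv A = mat 1" "matrix_inv A ** A = mat 1" by auto
qed

lemma inv_unique:
  fixes A B :: "real^'n::finite^'n"
  assumes "A ** B = mat 1" "B ** A = mat 1"
  shows "matrix_inv A = B"
proof -
  have inv: "invertible A" using assms invertible_def by blast
  have "matrix_inv A = matrix_inv A ** (A ** B)" by (simp add: assms)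
  also have "\<dots> = (matrix_inv A ** A) ** B" by (simp add: matrix_mul_assoc)
  also have "\<dots> = B" by (simp add: inv_props[OF inv])
  finally show ?thesis .
qed

lemma scaleR_mmul: "((c::real) *\<^sub>R (A::real^'n::finite^'m)) ** (B::real^'k::finite^'n) = c *\<^sub>R (A ** B)"
  "A ** (c *\<^sub>R B) = c *\<^sub>R (A ** B)"
  by (simp_all add: vec_eq_iff matrix_matrix_mult_def sum_distrib_left algebra_simps)

lemma inv_scale:
  fixes A :: "real^'n::finite^'n"
  assumes "invertible A" "c \<noteq> 0"
  shows "matrix_inv (c *\<^sub>R A) = inverse c *\<^sub>R matrix_inv A"
  by (rule inv_unique) (simp_all add: scaleR_mmul inv_props[OF assms(1)] assms(2))

lemma inv_transpose:
  fixes A :: "real^'n::finite^'n"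
  assumes "invertible A"
  shows "matrix_inv (transpose A) = transpose (matrix_inv A)"
  by (rule inv_unique) (simp_all add: matrix_transpose_mul[symmetric] inv_props[OF assms] transpose_mat)

lemma posdef_invertible:
  fixes A :: "real^'n::finite^'n"
  assumes "\<forall>v. v \<noteq> 0 \<longrightarrow> v \<bullet> (A *v v) > 0"
  shows "invertible A"
proof -
  have "\<forall>x. A *v x = 0 \<longrightarrow> x = 0"
  proof (intro allI impI)
    fix x assume "A *v x = 0"
    then show "x = 0" using assms by (metis inner_zero_right less_irrefl)
  qed
  then show ?thesis
    unfolding invertible_left_inverse matrix_left_invertible_ker .
qed

lemma metric_sym: "riem_metric_on U g \<Longrightarrow> x \<in> U \<Longrightarrow> g x $ i $ j = g x $ j $ i"
  unfolding riem_metric_on_def by blast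

lemma metric_inv: "riem_metric_on U g \<Longrightarrow> x \<in> U \<Longrightarrow> invertible (g x)"
  unfolding riem_metric_on_def using posdef_invertible by blast

lemma metric_diff: "riem_metric_on U g \<Longrightarrow> x \<in> U \<Longrightarrow> (\<lambda>y. g y $ i $ j) differentiable (at x)"
  unfolding riem_metric_on_def smooth_on_def by (metis ipd.simps(1))

lemma ginv_g:
  assumes "riem_metric_on U g" "x \<in> U"
  shows "(\<Sum>k\<in>UNIV. ginv g x i k * g x $ k $ j) = (if i = j then 1 else 0)"
  using inv_props(2)[OF metric_inv[OF assms]]
  by (simp add: ginv_def vec_eq_iff matrix_matrix_mult_def mat_def)

lemma g_ginv:
  assumes "riem_metric_on U g" "x \<in> U"
  shows "(\<Sum>k\<in>UNIV. g x $ i $ k * ginv g x k j) = (if i = j then 1 else 0)"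
  using inv_props(1)[OF metric_inv[OF assms]]
  by (simp add: ginv_def vec_eq_iff matrix_matrix_mult_def mat_def)

lemma ginv_sym:
  assumes "riem_metric_on U g" "x \<in> U"
  shows "ginv g x i j = ginv g x j i"
proof -
  have "transpose (g x) = g x"
    using metric_sym[OF assms] by (simp add: vec_eq_iff transpose_def)
  then have "matrix_inv (g x) = transpose (matrix_inv (g x))"
    using inv_transpose[OF metric_inv[OF assms]] by simp
  then show ?thesis unfolding ginv_def by (metis transpose_def vec_lambda_beta)
qed

lemma ginv_cramer:
  assumes "riem_metric_on U g" "x \<in> U"
  shows "ginv g x k l = det (\<chi> a b. if b = k then (if a = l then 1 else 0) else g x $ a $ b) / det (g x)"
proof -
  have inv: "invertible (g x)" using metric_inv[OF assms] .
  then have d: "det (g x) \<noteq> 0" using invertible_det_nz by blast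
  have "g x *v (matrix_inv (g x) *v axis l 1) = axis l 1"
    by (simp add: matrix_vector_mul_assoc inv_props[OF inv])
  then have "matrix_inv (g x) *v axis l 1 =
     (\<chi> k. det(\<chi> i j. if j=k then (axis l 1)$i else g x$i$j) / det (g x))"
    using cramer[OF d] by blast
  then have "(matrix_inv (g x) *v axis l 1) $ k =
     det(\<chi> i j. if j=k then (axis l 1)$i else g x$i$j) / det (g x)" by simp
  moreover have "(matrix_inv (g x) *v axis l 1) $ k = ginv g x k l"
    by (simp add: matrix_vector_mult_def axis_def ginv_def if_distrib cong: if_cong)
  moreover have "(\<chi> i j. if j=k then (axis l 1)$i else g x$i$j) = (\<chi> a b. if b = k then (if a = l then 1 else 0) else g x $ a $ b)"
    by (simp add: axis_def vec_eq_iff)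
  ultimately show ?thesis by simp
qed

lemma ginv_diff:
  assumes "riem_metric_on U g" "open U" "x \<in> U"
  shows "(\<lambda>y. ginv g y k l) differentiable (at x)"
proof (rule differentiable_cong[where S=U])
  show "(\<lambda>y. det (\<chi> a b. if b = k then (if a = l then 1 else 0) else g y $ a $ b) / det (g y)) differentiable (at x)"
  proof (intro differentiable_divide differentiable_det)
    fix a b
    show "(\<lambda>y. (\<chi> a b. if b = k then (if a = l then 1 else 0) else g y $ a $ b) $ a $ b) differentiable (at x)"
      by (cases "b = k") (auto intro: metric_diff[OF assms(1)] assms)
  qed (use metric_inv[OF assms(1,3)] invertible_det_nz metric_diff[OF assms(1,3)] in auto)
qed (use assms ginv_cramer in auto)


lemma smooth_diff0: "smooth_on U F \<Longrightarrow> x \<in> U \<Longrightarrow> F differentiable (at x)"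
  unfolding smooth_on_def by (metis ipd.simps(1))
lemma smooth_diff1: "smooth_on U F \<Longrightarrow> x \<in> U \<Longrightarrow> pd i F differentiable (at x)"
  unfolding smooth_on_def by (metis ipd.simps)
lemma smooth_diff2: "smooth_on U F \<Longrightarrow> x \<in> U \<Longrightarrow> pd i (pd j F) differentiable (at x)"
  unfolding smooth_on_def by (metis ipd.simps)

lemma metric_diff1: "riem_metric_on U g \<Longrightarrow> x \<in> U \<Longrightarrow> pd l (\<lambda>y. g y $ i $ j) differentiable (at x)"
  unfolding riem_metric_on_def using smooth_diff1 by blast

lemma exp_diff: "(F::real^'n::finite \<Rightarrow> real) differentiable (at x) \<Longrightarrow> (\<lambda>y. exp (F y)) differentiable (at x)"
proof -
  assume "F differentiable (at x)"
  then obtain F' where "(F has_derivative F') (at x)" unfolding differentiable_def by blast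
  from DERIV_compose_FDERIV[OF DERIV_exp[of "F x"] this] show ?thesis unfolding differentiable_def by blast
qed

lemma christ_eq: "christ g k i j = (\<lambda>x. (1/2) * (\<Sum>l\<in>UNIV. ginv g x k l *
      (pd i (\<lambda>y. g y $ j $ l) x + pd j (\<lambda>y. g y $ i $ l) x - pd l (\<lambda>y. g y $ i $ j) x)))"
  by (rule ext) (simp add: christ_def)

lemma christ_diff:
  assumes "riem_metric_on U g" "open U" "x \<in> U"
  shows "christ g k i j differentiable (at x)"
  unfolding christ_eq
  by (intro differentiable_mult differentiable_sum differentiable_const ballI finite
      differentiable_add differentiable_diff ginv_diff[OF assms] metric_diff1[OF assms(1,3)])

locale conf =
  fixes U :: "(real^'n::finite) set" and g :: "real^'n \<Rightarrow> real^'n^'n" and \<phi> :: "real^'n \<Rightarrow> real"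
  assumes U: "open U" and met: "riem_metric_on U g" and sm: "smooth_on U \<phi>"
begin

definition P where "P k y = (\<Sum>l\<in>UNIV. ginv g y k l * pd l \<phi> y)"
definition D where "D k i j y = (if k = j then pd i \<phi> y else 0) + (if k = i then pd j \<phi> y else 0)
    - g y $ i $ j * P k y"
definition gt where "gt y = exp (2 * \<phi> y) *\<^sub>R g y"

lemma gt_nth: "gt y $ i $ j = exp (2 * \<phi> y) * g y $ i $ j"
  by (simp add: gt_def)

lemma ginv_gt: "y \<in> U \<Longrightarrow> ginv gt y k l = exp (- 2 * \<phi> y) * ginv g y k l"
  unfolding ginv_def gt_def
  by (simp add: inv_scale metric_inv[OF met] exp_minus)

lemma phi_d0: "y \<in> U \<Longrightarrow> \<phi> differentiable (at y)" using smooth_diff0[OF sm] .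
lemma phi_d1: "y \<in> U \<Longrightarrow> pd i \<phi> differentiable (at y)" using smooth_diff1[OF sm] .
lemma phi_d2: "y \<in> U \<Longrightarrow> pd i (pd j \<phi>) differentiable (at y)" using smooth_diff2[OF sm] .
lemma g_d0: "y \<in> U \<Longrightarrow> (\<lambda>y. g y $ i $ j) differentiable (at y)" using metric_diff[OF met] .
lemma g_d1: "y \<in> U \<Longrightarrow> pd l (\<lambda>y. g y $ i $ j) differentiable (at y)" using metric_diff1[OF met] .
lemma ginv_d: "y \<in> U \<Longrightarrow> (\<lambda>y. ginv g y k l) differentiable (at y)" using ginv_diff[OF met U] .
lemma christ_d: "y \<in> U \<Longrightarrow> christ g k i j differentiable (at y)" using christ_diff[OF met U] .

lemma pd_gt: "y \<in> U \<Longrightarrow> pd l (\<lambda>y. gt y $ i $ j) y =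
   exp (2 * \<phi> y) * (2 * pd l \<phi> y * g y $ i $ j + pd l (\<lambda>y. g y $ i $ j) y)"
proof -
  assume y: "y \<in> U"
  have "pd l (\<lambda>y. gt y $ i $ j) y = pd l (\<lambda>y. exp (2 * \<phi> y) * g y $ i $ j) y"
    by (simp add: gt_nth)
  also have "\<dots> = pd l (\<lambda>y. exp (2 * \<phi> y)) y * g y $ i $ j + exp (2 * \<phi> y) * pd l (\<lambda>y. g y $ i $ j) y"
    by (rule pd_mult) (use y phi_d0 g_d0 exp_diff[OF differentiable_mult[OF differentiable_const phi_d0]] in auto)
  also have "pd l (\<lambda>y. exp (2 * \<phi> y)) y = exp (2 * \<phi> y) * (2 * pd l \<phi> y)"
    using pd_exp[of "\<lambda>y. 2 * \<phi> y"] pd_cmult[of \<phi> y l 2] y phi_d0 by auto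
  finally show ?thesis by (simp add: algebra_simps)
qed

lemma ginv_g': "y \<in> U \<Longrightarrow> (\<Sum>l\<in>UNIV. ginv g y k l * g y $ j $ l) = (if k = j then 1 else 0)"
  using ginv_g[OF met, of y k j] metric_sym[OF met, of y] by simp

lemma christ_gt: "y \<in> U \<Longrightarrow> christ gt k i j y = christ g k i j y + D k i j y"
proof -
  assume y: "y \<in> U"
  let ?e = "exp (2 * \<phi> y)"
  have "christ gt k i j y = (1/2) * (\<Sum>l\<in>UNIV. ginv g y k l *
      (pd i (\<lambda>y. g y $ j $ l) y + pd j (\<lambda>y. g y $ i $ l) y - pd l (\<lambda>y. g y $ i $ j) y
       + 2 * (pd i \<phi> y * g y $ j $ l + pd j \<phi> y * g y $ i $ l - pd l \<phi> y * g y $ i $ j)))"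
    unfolding christ_def
  proof (intro arg_cong[where f="\<lambda>z. (1/2) * z"] sum.cong refl)
    fix l
    have ee: "exp (- 2 * \<phi> y) * exp (2 * \<phi> y) = 1" by (simp add: exp_add[symmetric])
    have "ginv gt y k l * (pd i (\<lambda>y. gt y $ j $ l) y + pd j (\<lambda>y. gt y $ i $ l) y - pd l (\<lambda>y. gt y $ i $ j) y)
      = (exp (- 2 * \<phi> y) * exp (2 * \<phi> y)) * (ginv g y k l *
      (pd i (\<lambda>y. g y $ j $ l) y + pd j (\<lambda>y. g y $ i $ l) y - pd l (\<lambda>y. g y $ i $ j) y
       + 2 * (pd i \<phi> y * g y $ j $ l + pd j \<phi> y * g y $ i $ l - pd l \<phi> y * g y $ i $ j)))"
      by (simp add: ginv_gt[OF y] pd_gt[OF y] metric_sym[OF met y, of j i] algebra_simps)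
    then show "ginv gt y k l * (pd i (\<lambda>y. gt y $ j $ l) y + pd j (\<lambda>y. gt y $ i $ l) y - pd l (\<lambda>y. gt y $ i $ j) y)
      = ginv g y k l *
      (pd i (\<lambda>y. g y $ j $ l) y + pd j (\<lambda>y. g y $ i $ l) y - pd l (\<lambda>y. g y $ i $ j) y
       + 2 * (pd i \<phi> y * g y $ j $ l + pd j \<phi> y * g y $ i $ l - pd l \<phi> y * g y $ i $ j))"
      by (simp only: ee mult_1_left)
  qed
  also have "\<dots> = christ g k i j y + (pd i \<phi> y * (\<Sum>l\<in>UNIV. ginv g y k l * g y $ j $ l)
       + pd j \<phi> y * (\<Sum>l\<in>UNIV. ginv g y k l * g y $ i $ l) - g y $ i $ j * P k y)"
    unfolding christ_def P_def
    by (simp add: distrib_left sum.distrib sum_subtractf sum_distrib_left algebra_simps)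
  also have "\<dots> = christ g k i j y + D k i j y"
    unfolding D_def by (simp add: ginv_g'[OF y])
  finally show ?thesis .
qed

end

lemma delta_rep:
  fixes F :: "real^'n::finite \<Rightarrow> real"
  assumes sm: "smooth_on U F" and h: "h > 0"
    and inU: "\<And>s t. 0 \<le> s \<Longrightarrow> s \<le> h \<Longrightarrow> 0 \<le> t \<Longrightarrow> t \<le> h \<Longrightarrow>
        x + s *\<^sub>R axis i 1 + t *\<^sub>R axis j 1 \<in> U"
  shows "\<exists>s t. 0 < s \<and> s < h \<and> 0 < t \<and> t < h \<and>
     F (x + h *\<^sub>R axis i 1 + h *\<^sub>R axis j 1) - F (x + h *\<^sub>R axis i 1) - F (x + h *\<^sub>R axis j 1) + F x
     = h * h * pd j (pd i F) (x + s *\<^sub>R axis i 1 + t *\<^sub>R axis j 1)"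
proof -
  let ?a = "axis i 1 :: real^'n" and ?b = "axis j 1 :: real^'n"
  have d0: "\<And>y. y \<in> U \<Longrightarrow> F differentiable (at y)"
    using sm unfolding smooth_on_def by (metis ipd.simps(1))
  have d1: "\<And>y. y \<in> U \<Longrightarrow> pd i F differentiable (at y)"
    using sm unfolding smooth_on_def by (metis ipd.simps)
  define f1 where "f1 s = F ((x + h *\<^sub>R ?b) + s *\<^sub>R ?a) - F (x + s *\<^sub>R ?a)" for s
  have "\<And>s. 0 \<le> s \<Longrightarrow> s \<le> h \<Longrightarrow> DERIV f1 s :>
      (pd i F ((x + h *\<^sub>R ?b) + s *\<^sub>R ?a) - pd i F (x + s *\<^sub>R ?a))"
  proof -
    fix s :: real assume s: "0 \<le> s" "s \<le> h"
    have u1: "(x + h *\<^sub>R ?b) + s *\<^sub>R ?a \<in> U"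
      using inU[OF s, of h] h by (simp add: add_ac)
    have u2: "x + s *\<^sub>R ?a \<in> U"
      using inU[OF s, of 0] h by simp
    show "DERIV f1 s :> (pd i F ((x + h *\<^sub>R ?b) + s *\<^sub>R ?a) - pd i F (x + s *\<^sub>R ?a))"
      unfolding f1_def
      by (rule DERIV_diff; rule pd_DERIV) (use u1 u2 d0 in auto)
  qed
  from MVT2[OF h this]
  obtain s where s: "0 < s" "s < h"
    and e1: "f1 h - f1 0 = (h - 0) * (pd i F ((x + h *\<^sub>R ?b) + s *\<^sub>R ?a) - pd i F (x + s *\<^sub>R ?a))"
    by blast
  define f2 where "f2 t = pd i F ((x + s *\<^sub>R ?a) + t *\<^sub>R ?b)" for t
  have "\<And>t. 0 \<le> t \<Longrightarrow> t \<le> h \<Longrightarrow> DERIV f2 t :> pd j (pd i F) ((x + s *\<^sub>R ?a) + t *\<^sub>R ?b)"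
  proof -
    fix t :: real assume t: "0 \<le> t" "t \<le> h"
    have "(x + s *\<^sub>R ?a) + t *\<^sub>R ?b \<in> U" using inU[of s t] s t by simp
    then show "DERIV f2 t :> pd j (pd i F) ((x + s *\<^sub>R ?a) + t *\<^sub>R ?b)"
      unfolding f2_def by (intro pd_DERIV d1)
  qed
  from MVT2[OF h this]
  obtain t where t: "0 < t" "t < h"
    and e2: "f2 h - f2 0 = (h - 0) * pd j (pd i F) ((x + s *\<^sub>R ?a) + t *\<^sub>R ?b)"
    by blast
  have "F (x + h *\<^sub>R ?a + h *\<^sub>R ?b) - F (x + h *\<^sub>R ?a) - F (x + h *\<^sub>R ?b) + F x = f1 h - f1 0"
    unfolding f1_def by (simp add: add_ac)
  also have "\<dots> = h * (f2 h - f2 0)"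
    using e1 unfolding f2_def by (simp add: add_ac)
  also have "\<dots> = h * h * pd j (pd i F) (x + s *\<^sub>R ?a + t *\<^sub>R ?b)"
    using e2 by simp
  finally show ?thesis using s t by blast
qed

lemma clairaut:
  fixes F :: "real^'n::finite \<Rightarrow> real"
  assumes U: "open U" and x: "x \<in> U" and sm: "smooth_on U F"
  shows "pd i (pd j F) x = pd j (pd i F) x"
proof (rule ccontr)
  let ?a = "axis i 1 :: real^'n" and ?b = "axis j 1 :: real^'n"
  let ?A = "pd j (pd i F) x" and ?B = "pd i (pd j F) x"
  assume ne: "?B \<noteq> ?A"
  define e where "e = \<bar>?A - ?B\<bar> / 2"
  have e: "e > 0" using ne by (simp add: e_def)
  have c1: "continuous (at x) (pd j (pd i F))"
    using sm x unfolding smooth_on_def by (metis ipd.simps differentiable_imp_continuous_within)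
  have c2: "continuous (at x) (pd i (pd j F))"
    using sm x unfolding smooth_on_def by (metis ipd.simps differentiable_imp_continuous_within)
  obtain d1 where d1: "d1 > 0" "\<And>y. dist y x < d1 \<Longrightarrow> dist (pd j (pd i F) y) ?A < e"
    using c1 e unfolding continuous_within_eps_delta by (metis UNIV_I)
  obtain d2 where d2: "d2 > 0" "\<And>y. dist y x < d2 \<Longrightarrow> dist (pd i (pd j F) y) ?B < e"
    using c2 e unfolding continuous_within_eps_delta by (metis UNIV_I)
  obtain d0 where d0: "d0 > 0" "ball x d0 \<subseteq> U" using U x openE by blast
  define d where "d = min d0 (min d1 d2)"
  have d: "d > 0" using d0 d1 d2 by (simp add: d_def)
  define h where "h = d / 4"
  have h: "h > 0" using d by (simp add: h_def)
  have near: "dist (x + s *\<^sub>R axis k 1 + t *\<^sub>R axis l 1) x < d"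
    if "0 \<le> s" "s \<le> h" "0 \<le> t" "t \<le> h" for s t and k l :: 'n
  proof -
    have "dist (x + s *\<^sub>R axis k 1 + t *\<^sub>R axis l 1) x = norm (s *\<^sub>R axis k (1::real) + t *\<^sub>R axis l 1)"
      by (simp add: dist_norm)
    also have "\<dots> \<le> norm (s *\<^sub>R axis k (1::real)) + norm (t *\<^sub>R axis l (1::real))"
      by (rule norm_triangle_ineq)
    also have "\<dots> = s + t" using that by simp
    also have "\<dots> < d" using that h_def d by simp
    finally show ?thesis .
  qed
  have inU: "x + s *\<^sub>R axis k 1 + t *\<^sub>R axis l 1 \<in> U"
    if "0 \<le> s" "s \<le> h" "0 \<le> t" "t \<le> h" for s t and k l :: 'n
    using near[OF that, of k l] d0 by (auto simp: d_def dist_commute)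
  obtain s t where st: "0 < s" "s < h" "0 < t" "t < h" and
    r1: "F (x + h *\<^sub>R ?a + h *\<^sub>R ?b) - F (x + h *\<^sub>R ?a) - F (x + h *\<^sub>R ?b) + F x
     = h * h * pd j (pd i F) (x + s *\<^sub>R ?a + t *\<^sub>R ?b)"
    using delta_rep[OF sm h, of x i j] inU by blast
  obtain s' t' where st': "0 < s'" "s' < h" "0 < t'" "t' < h" and
    r2: "F (x + h *\<^sub>R ?b + h *\<^sub>R ?a) - F (x + h *\<^sub>R ?b) - F (x + h *\<^sub>R ?a) + F x
     = h * h * pd i (pd j F) (x + s' *\<^sub>R ?b + t' *\<^sub>R ?a)"
    using delta_rep[OF sm h, of x j i] inU by blast
  have "h * h * pd j (pd i F) (x + s *\<^sub>R ?a + t *\<^sub>R ?b) = h * h * pd i (pd j F) (x + s' *\<^sub>R ?b + t' *\<^sub>R ?a)"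
  proof -
    have eqx: "x + h *\<^sub>R ?b + h *\<^sub>R ?a = x + h *\<^sub>R ?a + h *\<^sub>R ?b" by (simp add: add_ac)
    show ?thesis using r1 r2[unfolded eqx] by linarith
  qed
  then have eq: "pd j (pd i F) (x + s *\<^sub>R ?a + t *\<^sub>R ?b) = pd i (pd j F) (x + s' *\<^sub>R ?b + t' *\<^sub>R ?a)"
    using h by simp
  have "dist (pd j (pd i F) (x + s *\<^sub>R ?a + t *\<^sub>R ?b)) ?A < e"
    using d1(2) near[of s t i j] st by (simp add: d_def)
  moreover have "dist (pd i (pd j F) (x + s' *\<^sub>R ?b + t' *\<^sub>R ?a)) ?B < e"
    using d2(2) near[of s' t' j i] st' by (simp add: d_def)
  ultimately have "\<bar>?A - ?B\<bar> < 2 * e" using eq by (simp add: dist_real_def)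
  then show False by (simp add: e_def)
qed


lemma delta_mult[simp]: "(if c then 1 else 0) * (a::real) = (if c then a else 0)"
  "a * (if c then 1 else 0) = (if c then a else 0)"
  "(if c then b else 0) * (a::real) = (if c then b * a else 0)"
  "a * (if c then b else 0) = (if c then a * b else 0)"
  by auto

context conf begin

lemma contr_g_ginv: "y \<in> U \<Longrightarrow> (\<Sum>k\<in>UNIV. g y $ i $ k * (\<Sum>m\<in>UNIV. ginv g y k m * X m)) = X i"
proof -
  assume y: "y \<in> U"
  have "(\<Sum>k\<in>UNIV. g y $ i $ k * (\<Sum>m\<in>UNIV. ginv g y k m * X m))
      = (\<Sum>m\<in>UNIV. (\<Sum>k\<in>UNIV. g y $ i $ k * ginv g y k m) * X m)"
    by (simp add: sum_distrib_left sum_distrib_right mult.assoc, rule sum.swap)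
  also have "\<dots> = X i" by (simp add: g_ginv[OF met y])
  finally show ?thesis .
qed

lemma contr_ginv_g: "y \<in> U \<Longrightarrow> (\<Sum>k\<in>UNIV. ginv g y i k * (\<Sum>m\<in>UNIV. g y $ k $ m * X m)) = X i"
proof -
  assume y: "y \<in> U"
  have "(\<Sum>k\<in>UNIV. ginv g y i k * (\<Sum>m\<in>UNIV. g y $ k $ m * X m))
      = (\<Sum>m\<in>UNIV. (\<Sum>k\<in>UNIV. ginv g y i k * g y $ k $ m) * X m)"
    by (simp add: sum_distrib_left sum_distrib_right mult.assoc, rule sum.swap)
  also have "\<dots> = X i" by (simp add: ginv_g[OF met y])
  finally show ?thesis .
qed

lemma g_P: "y \<in> U \<Longrightarrow> (\<Sum>k\<in>UNIV. g y $ i $ k * P k y) = pd i \<phi> y"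
  unfolding P_def by (rule contr_g_ginv)

lemma pd_gsym: "y \<in> U \<Longrightarrow> pd l (\<lambda>y. g y $ a $ b) y = pd l (\<lambda>y. g y $ b $ a) y"
  by (rule pd_cong[OF U]) (use metric_sym[OF met] in auto)

lemma pd_ginv: "x \<in> U \<Longrightarrow> pd c (\<lambda>y. ginv g y k l) x =
   - (\<Sum>a\<in>UNIV. ginv g x k a * (\<Sum>b\<in>UNIV. pd c (\<lambda>y. g y $ a $ b) x * ginv g x b l))"
proof -
  assume x: "x \<in> U"
  have eq0: "\<And>a. (\<Sum>b\<in>UNIV. pd c (\<lambda>y. g y $ a $ b) x * ginv g x b l + g x $ a $ b * pd c (\<lambda>y. ginv g y b l) x) = 0"
  proof -
    fix a
    have "pd c (\<lambda>y. \<Sum>b\<in>UNIV. g y $ a $ b * ginv g y b l) x = pd c (\<lambda>y. if a = l then 1 else 0) x"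
      by (rule pd_cong[OF U x]) (simp add: g_ginv[OF met])
    also have "\<dots> = 0" by (rule pd_const)
    finally have "pd c (\<lambda>y. \<Sum>b\<in>UNIV. g y $ a $ b * ginv g y b l) x = 0" .
    moreover have "pd c (\<lambda>y. \<Sum>b\<in>UNIV. g y $ a $ b * ginv g y b l) x =
        (\<Sum>b\<in>UNIV. pd c (\<lambda>y. g y $ a $ b * ginv g y b l) x)"
      by (rule pd_sum) (use x g_d0 ginv_d in auto)
    moreover have "\<And>b. pd c (\<lambda>y. g y $ a $ b * ginv g y b l) x =
        pd c (\<lambda>y. g y $ a $ b) x * ginv g x b l + g x $ a $ b * pd c (\<lambda>y. ginv g y b l) x"
      by (rule pd_mult) (use x g_d0 ginv_d in auto)
    ultimately show "(\<Sum>b\<in>UNIV. pd c (\<lambda>y. g y $ a $ b) x * ginv g x b l + g x $ a $ b * pd c (\<lambda>y. ginv g y b l) x) = 0"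
      by simp
  qed
  have "pd c (\<lambda>y. ginv g y k l) x = (\<Sum>a\<in>UNIV. ginv g x k a * (\<Sum>b\<in>UNIV. g x $ a $ b * pd c (\<lambda>y. ginv g y b l) x))"
    by (rule contr_ginv_g[OF x, symmetric])
  also have "\<dots> = (\<Sum>a\<in>UNIV. ginv g x k a * (- (\<Sum>b\<in>UNIV. pd c (\<lambda>y. g y $ a $ b) x * ginv g x b l)))"
  proof (rule sum.cong[OF refl])
    fix a
    have "(\<Sum>b\<in>UNIV. g x $ a $ b * pd c (\<lambda>y. ginv g y b l) x) = - (\<Sum>b\<in>UNIV. pd c (\<lambda>y. g y $ a $ b) x * ginv g x b l)"
      using eq0[of a] by (simp add: sum.distrib eq_neg_iff_add_eq_0 add.commute)
    then show "ginv g x k a * (\<Sum>b\<in>UNIV. g x $ a $ b * pd c (\<lambda>y. ginv g y b l) x) =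
       ginv g x k a * - (\<Sum>b\<in>UNIV. pd c (\<lambda>y. g y $ a $ b) x * ginv g x b l)" by simp
  qed
  also have "\<dots> = - (\<Sum>a\<in>UNIV. ginv g x k a * (\<Sum>b\<in>UNIV. pd c (\<lambda>y. g y $ a $ b) x * ginv g x b l))"
    by (simp add: sum_negf)
  finally show ?thesis .
qed

end

lemma if_diff: "(F::real^'n::finite \<Rightarrow> real) differentiable (at y) \<Longrightarrow> (\<lambda>z. if c then F z else 0) differentiable (at y)"
  by (cases c) auto

lemma pd_if: "pd l (\<lambda>z. if c then F z else 0) y = (if c then pd l F y else 0)"
  by (cases c) (auto simp: pd_const)

context conf begin

lemma P_eq: "P k = (\<lambda>y. \<Sum>l\<in>UNIV. ginv g y k l * pd l \<phi> y)"
  by (rule ext) (simp add: P_def)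

lemma D_eq: "D k i j = (\<lambda>y. (if k = j then pd i \<phi> y else 0) + (if k = i then pd j \<phi> y else 0)
    - g y $ i $ j * P k y)"
  by (rule ext) (simp add: D_def)

lemma P_d: "y \<in> U \<Longrightarrow> P k differentiable (at y)"
  unfolding P_eq by (intro differentiable_sum differentiable_mult ballI finite ginv_d phi_d1)

lemma D_d: "y \<in> U \<Longrightarrow> D k i j differentiable (at y)"
  unfolding D_eq by (intro differentiable_add differentiable_diff differentiable_mult if_diff phi_d1 g_d0 P_d)

lemma pd_P: "x \<in> U \<Longrightarrow> pd c (P k) x =
   (\<Sum>l\<in>UNIV. pd c (\<lambda>y. ginv g y k l) x * pd l \<phi> x + ginv g x k l * pd c (pd l \<phi>) x)"
proof -
  assume x: "x \<in> U"
  have "pd c (P k) x = (\<Sum>l\<in>UNIV. pd c (\<lambda>y. ginv g y k l * pd l \<phi> y) x)"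
    unfolding P_eq by (rule pd_sum) (use x ginv_d phi_d1 in auto)
  also have "\<dots> = (\<Sum>l\<in>UNIV. pd c (\<lambda>y. ginv g y k l) x * pd l \<phi> x + ginv g x k l * pd c (pd l \<phi>) x)"
    by (rule sum.cong[OF refl], rule pd_mult) (use x ginv_d phi_d1 in auto)
  finally show ?thesis .
qed

lemma pd_D: "x \<in> U \<Longrightarrow> pd l (D k i j) x = (if k = j then pd l (pd i \<phi>) x else 0)
   + (if k = i then pd l (pd j \<phi>) x else 0)
   - (pd l (\<lambda>y. g y $ i $ j) x * P k x + g x $ i $ j * pd l (P k) x)"
proof -
  assume x: "x \<in> U"
  have d1: "(\<lambda>z. if k = j then pd i \<phi> z else 0) differentiable (at x)"
    by (intro if_diff phi_d1 x)
  have d2: "(\<lambda>z. if k = i then pd j \<phi> z else 0) differentiable (at x)"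
    by (intro if_diff phi_d1 x)
  have d3: "(\<lambda>z. g z $ i $ j * P k z) differentiable (at x)"
    by (intro differentiable_mult g_d0 P_d x)
  show ?thesis unfolding D_eq
    by (simp add: pd_diff[OF differentiable_add[OF d1 d2] d3] pd_add[OF d1 d2]
        pd_mult[OF g_d0[OF x] P_d[OF x]] pd_if)
qed

lemma sumD: "y \<in> U \<Longrightarrow> (\<Sum>k\<in>UNIV. D k k i y) = real CARD('n) * pd i \<phi> y"
proof -
  assume y: "y \<in> U"
  have "(\<Sum>k\<in>UNIV. D k k i y) = (\<Sum>k\<in>UNIV. (if k = i then pd k \<phi> y else 0)) + (\<Sum>k\<in>(UNIV::'n set). pd i \<phi> y)
      - (\<Sum>k\<in>UNIV. g y $ i $ k * P k y)"
    unfolding D_def by (simp add: sum.distrib sum_subtractf metric_sym[OF met y, of _ i])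
  also have "\<dots> = real CARD('n) * pd i \<phi> y"
    by (simp add: g_P[OF y])
  finally show ?thesis .
qed

lemma R3: "x \<in> U \<Longrightarrow> (\<Sum>k\<in>UNIV. pd j (D k k i) x) = real CARD('n) * pd j (pd i \<phi>) x"
proof -
  assume x: "x \<in> U"
  have "(\<Sum>k\<in>UNIV. pd j (D k k i) x) = pd j (\<lambda>y. \<Sum>k\<in>UNIV. D k k i y) x"
    by (rule pd_sum[symmetric]) (use x D_d in auto)
  also have "\<dots> = pd j (\<lambda>y. real CARD('n) * pd i \<phi> y) x"
    by (rule pd_cong[OF U x]) (simp add: sumD)
  also have "\<dots> = real CARD('n) * pd j (pd i \<phi>) x"
    by (rule pd_cmult, rule phi_d1[OF x])
  finally show ?thesis .
qed

lemma R2: "x \<in> U \<Longrightarrow> (\<Sum>k\<in>UNIV. pd k (D k i j) x) = pd j (pd i \<phi>) x + pd i (pd j \<phi>) x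
   - (\<Sum>k\<in>UNIV. pd k (\<lambda>y. g y $ i $ j) x * P k x) - g x $ i $ j * (\<Sum>k\<in>UNIV. pd k (P k) x)"
  by (simp add: pd_D sum.distrib sum_subtractf sum_distrib_left)

end

context conf begin

definition GG where "GG a x = (\<Sum>k\<in>UNIV. christ g k k a x)"
definition CP where "CP i j x = (\<Sum>k\<in>UNIV. christ g k i j x * pd k \<phi> x)"

lemma christ_sym: "x \<in> U \<Longrightarrow> christ g k i j x = christ g k j i x"
  unfolding christ_def by (simp add: pd_gsym[of x l i j for l] algebra_simps)

lemma N2_P: "x \<in> U \<Longrightarrow> gip g \<phi> \<phi> x = (\<Sum>k\<in>UNIV. P k x * pd k \<phi> x)"
  unfolding gip_def P_def by (simp add: sum_distrib_right sum_distrib_left algebra_simps)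

lemma sum_swap_sym:
  assumes "\<And>k l. A k l = A l k"
  shows "(\<Sum>k\<in>UNIV. \<Sum>l\<in>UNIV. A k l * B k l) = (\<Sum>k\<in>UNIV. \<Sum>l\<in>UNIV. A k l * B l k)"
  by (subst sum.swap) (simp add: assms)

lemma GG_eq: "x \<in> U \<Longrightarrow> GG a x = (1/2) * (\<Sum>k\<in>UNIV. \<Sum>l\<in>UNIV. ginv g x k l * pd a (\<lambda>y. g y $ k $ l) x)"
proof -
  assume x: "x \<in> U"
  have sw: "(\<Sum>k\<in>UNIV. \<Sum>l\<in>UNIV. ginv g x k l * pd k (\<lambda>y. g y $ a $ l) x)
     = (\<Sum>k\<in>UNIV. \<Sum>l\<in>UNIV. ginv g x k l * pd l (\<lambda>y. g y $ k $ a) x)"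
    by (subst sum_swap_sym[where A="\<lambda>k l. ginv g x k l"]) (simp_all add: ginv_sym[OF met x] pd_gsym[OF x])
  have "GG a x = (1/2) * ((\<Sum>k\<in>UNIV. \<Sum>l\<in>UNIV. ginv g x k l * pd k (\<lambda>y. g y $ a $ l) x)
     + (\<Sum>k\<in>UNIV. \<Sum>l\<in>UNIV. ginv g x k l * pd a (\<lambda>y. g y $ k $ l) x)
     - (\<Sum>k\<in>UNIV. \<Sum>l\<in>UNIV. ginv g x k l * pd l (\<lambda>y. g y $ k $ a) x))"
    unfolding GG_def christ_def
    by (simp add: sum_distrib_left[symmetric] sum.distrib sum_subtractf algebra_simps sum_divide_distrib[symmetric])
  then show ?thesis using sw by simp
qed

lemma I3: "x \<in> U \<Longrightarrow> (\<Sum>k\<in>UNIV. g x $ i $ k * christ g k j l x) =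
   (1/2) * (pd j (\<lambda>y. g y $ l $ i) x + pd l (\<lambda>y. g y $ j $ i) x - pd i (\<lambda>y. g y $ j $ l) x)"
proof -
  assume x: "x \<in> U"
  have "\<And>k. christ g k j l x = (\<Sum>m\<in>UNIV. ginv g x k m *
     ((1/2) * (pd j (\<lambda>y. g y $ l $ m) x + pd l (\<lambda>y. g y $ j $ m) x - pd m (\<lambda>y. g y $ j $ l) x)))"
    unfolding christ_def by (simp add: sum_distrib_left algebra_simps)
  then show ?thesis
    using contr_g_ginv[OF x, of i "\<lambda>m. (1/2) * (pd j (\<lambda>y. g y $ l $ m) x + pd l (\<lambda>y. g y $ j $ m) x - pd m (\<lambda>y. g y $ j $ l) x)"]
    by simp
qed

lemma Sym: "x \<in> U \<Longrightarrow>
   (\<Sum>k\<in>UNIV. \<Sum>l\<in>UNIV. christ g k j l x * g x $ k $ i * P l x)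
 + (\<Sum>k\<in>UNIV. \<Sum>l\<in>UNIV. g x $ j $ l * P k x * christ g l k i x)
 = (\<Sum>l\<in>UNIV. pd l (\<lambda>y. g y $ i $ j) x * P l x)"
proof -
  assume x: "x \<in> U"
  have 1: "(\<Sum>k\<in>UNIV. \<Sum>l\<in>UNIV. christ g k j l x * g x $ k $ i * P l x)
     = (\<Sum>l\<in>UNIV. P l x * (\<Sum>k\<in>UNIV. g x $ i $ k * christ g k j l x))"
    apply (subst sum.swap)
    by (simp add: sum_distrib_left metric_sym[OF met x, of _ i] algebra_simps)
  have 2: "(\<Sum>k\<in>UNIV. \<Sum>l\<in>UNIV. g x $ j $ l * P k x * christ g l k i x)
     = (\<Sum>k\<in>UNIV. P k x * (\<Sum>l\<in>UNIV. g x $ j $ l * christ g l k i x))"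
    by (simp add: sum_distrib_left algebra_simps)
  show ?thesis
    unfolding 1 2 I3[OF x] sum.distrib[symmetric]
  proof (rule sum.cong[OF refl])
    fix l
    have e1: "pd l (\<lambda>y. g y $ j $ i) x = pd l (\<lambda>y. g y $ i $ j) x" by (rule pd_gsym[OF x])
    have e2: "pd i (\<lambda>y. g y $ l $ j) x = pd i (\<lambda>y. g y $ j $ l) x" by (rule pd_gsym[OF x])
    show "P l x * ((1/2) * (pd j (\<lambda>y. g y $ l $ i) x + pd l (\<lambda>y. g y $ j $ i) x - pd i (\<lambda>y. g y $ j $ l) x)) +
          P l x * ((1/2) * (pd l (\<lambda>y. g y $ i $ j) x + pd i (\<lambda>y. g y $ l $ j) x - pd j (\<lambda>y. g y $ l $ i) x)) =
          pd l (\<lambda>y. g y $ i $ j) x * P l x"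
      unfolding e1 e2 by (simp add: algebra_simps)
  qed
qed

lemma Ta: "(\<Sum>k\<in>UNIV. \<Sum>l\<in>UNIV. christ g k k l x * D l i j x) =
   GG j x * pd i \<phi> x + GG i x * pd j \<phi> x - g x $ i $ j * (\<Sum>l\<in>UNIV. GG l x * P l x)"
proof -
  have "(\<Sum>k\<in>UNIV. \<Sum>l\<in>UNIV. christ g k k l x * D l i j x) = (\<Sum>l\<in>UNIV. GG l x * D l i j x)"
    unfolding GG_def by (subst sum.swap) (simp add: sum_distrib_right)
  also have "\<dots> = GG j x * pd i \<phi> x + GG i x * pd j \<phi> x - g x $ i $ j * (\<Sum>l\<in>UNIV. GG l x * P l x)"
    unfolding D_def by (simp add: distrib_left right_diff_distrib sum.distrib sum_subtractf sum_distrib_left algebra_simps)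
  finally show ?thesis .
qed

lemma Tb: "x \<in> U \<Longrightarrow> (\<Sum>k\<in>UNIV. \<Sum>l\<in>UNIV. D k k l x * christ g l i j x) = real CARD('n) * CP i j x"
proof -
  assume x: "x \<in> U"
  have "(\<Sum>k\<in>UNIV. \<Sum>l\<in>UNIV. D k k l x * christ g l i j x) = (\<Sum>l\<in>UNIV. (\<Sum>k\<in>UNIV. D k k l x) * christ g l i j x)"
    by (subst sum.swap) (simp add: sum_distrib_right)
  also have "\<dots> = real CARD('n) * CP i j x"
    unfolding CP_def by (simp add: sumD[OF x] sum_distrib_left algebra_simps)
  finally show ?thesis .
qed

lemma Tc: "x \<in> U \<Longrightarrow> (\<Sum>k\<in>UNIV. \<Sum>l\<in>UNIV. D k k l x * D l i j x) =
   real CARD('n) * (2 * pd i \<phi> x * pd j \<phi> x - g x $ i $ j * gip g \<phi> \<phi> x)"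
proof -
  assume x: "x \<in> U"
  have "(\<Sum>k\<in>UNIV. \<Sum>l\<in>UNIV. D k k l x * D l i j x) = (\<Sum>l\<in>UNIV. (\<Sum>k\<in>UNIV. D k k l x) * D l i j x)"
    by (subst sum.swap) (simp add: sum_distrib_right)
  also have "\<dots> = (\<Sum>l\<in>UNIV. (real CARD('n) * pd l \<phi> x) * D l i j x)"
    by (simp add: sumD[OF x])
  also have "\<dots> = real CARD('n) * (2 * pd i \<phi> x * pd j \<phi> x - g x $ i $ j * gip g \<phi> \<phi> x)"
    unfolding N2_P[OF x] D_def
    by (simp add: distrib_left right_diff_distrib sum.distrib sum_subtractf sum_distrib_left algebra_simps)
  finally show ?thesis .
qed


lemma sum_if_cond[simp]: "(\<Sum>l\<in>S. if c then F l else (0::real)) = (if c then (\<Sum>l\<in>S. F l) else 0)"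
  by auto

lemma Td: "x \<in> U \<Longrightarrow> (\<Sum>k\<in>UNIV. \<Sum>l\<in>UNIV. christ g k j l x * D l k i x) =
   CP j i x + pd i \<phi> x * GG j x - (\<Sum>k\<in>UNIV. \<Sum>l\<in>UNIV. christ g k j l x * g x $ k $ i * P l x)"
proof -
  assume x: "x \<in> U"
  have split: "(\<Sum>k\<in>UNIV. \<Sum>l\<in>UNIV. christ g k j l x * D l k i x) =
     (\<Sum>k\<in>UNIV. \<Sum>l\<in>UNIV. christ g k j l x * (if l = i then pd k \<phi> x else 0))
   + (\<Sum>k\<in>UNIV. \<Sum>l\<in>UNIV. christ g k j l x * (if l = k then pd i \<phi> x else 0))
   - (\<Sum>k\<in>UNIV. \<Sum>l\<in>UNIV. christ g k j l x * g x $ k $ i * P l x)"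
    unfolding D_def by (simp only: ring_distribs sum.distrib sum_subtractf mult.assoc)
  have a: "(\<Sum>k\<in>UNIV. \<Sum>l\<in>UNIV. christ g k j l x * (if l = i then pd k \<phi> x else 0)) = CP j i x"
    by (simp add: CP_def)
  have b: "(\<Sum>k\<in>UNIV. \<Sum>l\<in>UNIV. christ g k j l x * (if l = k then pd i \<phi> x else 0)) = pd i \<phi> x * GG j x"
    by (simp add: GG_def sum_distrib_left christ_sym[OF x, of _ j] mult.commute)
  show ?thesis unfolding split a b ..
qed

lemma Te: "x \<in> U \<Longrightarrow> (\<Sum>k\<in>UNIV. \<Sum>l\<in>UNIV. D k j l x * christ g l k i x) =
   pd j \<phi> x * GG i x + CP j i x - (\<Sum>k\<in>UNIV. \<Sum>l\<in>UNIV. g x $ j $ l * P k x * christ g l k i x)"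
proof -
  assume x: "x \<in> U"
  have split: "(\<Sum>k\<in>UNIV. \<Sum>l\<in>UNIV. D k j l x * christ g l k i x) =
     (\<Sum>k\<in>UNIV. \<Sum>l\<in>UNIV. (if k = l then pd j \<phi> x else 0) * christ g l k i x)
   + (\<Sum>k\<in>UNIV. \<Sum>l\<in>UNIV. (if k = j then pd l \<phi> x else 0) * christ g l k i x)
   - (\<Sum>k\<in>UNIV. \<Sum>l\<in>UNIV. g x $ j $ l * P k x * christ g l k i x)"
    unfolding D_def by (simp only: ring_distribs sum.distrib sum_subtractf mult.assoc)
  have a: "(\<Sum>k\<in>UNIV. \<Sum>l\<in>UNIV. (if k = l then pd j \<phi> x else 0) * christ g l k i x) = pd j \<phi> x * GG i x"
    by (simp add: GG_def sum_distrib_left)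
  have b: "(\<Sum>k\<in>UNIV. \<Sum>l\<in>UNIV. (if k = j then pd l \<phi> x else 0) * christ g l k i x) = CP j i x"
    by (simp add: CP_def mult.commute)
  show ?thesis unfolding split a b ..
qed

lemma Tf: "x \<in> U \<Longrightarrow> (\<Sum>k\<in>UNIV. \<Sum>l\<in>UNIV. D k j l x * D l k i x) =
   (real CARD('n) + 2) * pd i \<phi> x * pd j \<phi> x - 2 * g x $ i $ j * gip g \<phi> \<phi> x"
proof -
  assume x: "x \<in> U"
  let ?pi = "pd i \<phi> x" and ?pj = "pd j \<phi> x"
  have split: "(\<Sum>k\<in>UNIV. \<Sum>l\<in>UNIV. D k j l x * D l k i x) =
      (\<Sum>k\<in>UNIV. \<Sum>l\<in>UNIV. (if k = l then ?pj else 0) * (if l = i then pd k \<phi> x else 0))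
    + (\<Sum>k\<in>(UNIV::'n set). \<Sum>l\<in>UNIV. (if k = l then ?pj else 0) * (if l = k then ?pi else 0))
    - (\<Sum>k\<in>UNIV. \<Sum>l\<in>UNIV. (if k = l then ?pj else 0) * (g x $ k $ i * P l x))
    + (\<Sum>k\<in>UNIV. \<Sum>l\<in>UNIV. (if k = j then pd l \<phi> x else 0) * (if l = i then pd k \<phi> x else 0))
    + (\<Sum>k\<in>UNIV. \<Sum>l\<in>UNIV. (if k = j then pd l \<phi> x else 0) * (if l = k then ?pi else 0))
    - (\<Sum>k\<in>UNIV. \<Sum>l\<in>UNIV. (if k = j then pd l \<phi> x else 0) * (g x $ k $ i * P l x))
    - (\<Sum>k\<in>UNIV. \<Sum>l\<in>UNIV. (g x $ j $ l * P k x) * (if l = i then pd k \<phi> x else 0))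
    - (\<Sum>k\<in>UNIV. \<Sum>l\<in>UNIV. (g x $ j $ l * P k x) * (if l = k then ?pi else 0))
    + (\<Sum>k\<in>UNIV. \<Sum>l\<in>UNIV. (g x $ j $ l * P k x) * (g x $ k $ i * P l x))"
  proof -
    have pw: "\<And>k l. D k j l x * D l k i x =
      (if k = l then ?pj else 0) * (if l = i then pd k \<phi> x else 0)
    + (if k = l then ?pj else 0) * (if l = k then ?pi else 0)
    - (if k = l then ?pj else 0) * (g x $ k $ i * P l x)
    + (if k = j then pd l \<phi> x else 0) * (if l = i then pd k \<phi> x else 0)
    + (if k = j then pd l \<phi> x else 0) * (if l = k then ?pi else 0)
    - (if k = j then pd l \<phi> x else 0) * (g x $ k $ i * P l x)
    - (g x $ j $ l * P k x) * (if l = i then pd k \<phi> x else 0)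
    - (g x $ j $ l * P k x) * (if l = k then ?pi else 0)
    + (g x $ j $ l * P k x) * (g x $ k $ i * P l x)"
      unfolding D_def by (simp only: ring_distribs)
    show ?thesis unfolding pw by (simp only: sum.distrib sum_subtractf)
  qed
  have gP: "\<And>a. (\<Sum>k\<in>UNIV. g x $ k $ a * P k x) = pd a \<phi> x"
    using g_P[OF x] metric_sym[OF met x] by (metis (no_types, lifting) sum.cong)
  have t1: "(\<Sum>k\<in>UNIV. \<Sum>l\<in>UNIV. (if k = l then ?pj else 0) * (if l = i then pd k \<phi> x else 0)) = ?pi * ?pj"
    by simp
  have t2: "(\<Sum>k\<in>(UNIV::'n set). \<Sum>l\<in>UNIV. (if k = l then ?pj else 0) * (if l = k then ?pi else 0)) = real CARD('n) * ?pi * ?pj"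
    by simp
  have t3: "(\<Sum>k\<in>UNIV. \<Sum>l\<in>UNIV. (if k = l then ?pj else 0) * (g x $ k $ i * P l x)) = ?pi * ?pj"
    by (simp add: sum_distrib_left[symmetric] gP)
  have t4: "(\<Sum>k\<in>UNIV. \<Sum>l\<in>UNIV. (if k = j then pd l \<phi> x else 0) * (if l = i then pd k \<phi> x else 0)) = ?pi * ?pj"
    by simp
  have t5: "(\<Sum>k\<in>UNIV. \<Sum>l\<in>UNIV. (if k = j then pd l \<phi> x else 0) * (if l = k then ?pi else 0)) = ?pi * ?pj"
    by simp
  have t6: "(\<Sum>k\<in>UNIV. \<Sum>l\<in>UNIV. (if k = j then pd l \<phi> x else 0) * (g x $ k $ i * P l x)) = g x $ i $ j * gip g \<phi> \<phi> x"
    by (simp add: N2_P[OF x] sum_distrib_left metric_sym[OF met x, of j i] algebra_simps)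
  have t7: "(\<Sum>k\<in>UNIV. \<Sum>l\<in>UNIV. (g x $ j $ l * P k x) * (if l = i then pd k \<phi> x else 0)) = g x $ i $ j * gip g \<phi> \<phi> x"
    by (simp add: N2_P[OF x] sum_distrib_left metric_sym[OF met x, of j i] algebra_simps)
  have t8: "(\<Sum>k\<in>UNIV. \<Sum>l\<in>UNIV. (g x $ j $ l * P k x) * (if l = k then ?pi else 0)) = ?pi * ?pj"
    by (simp add: sum_distrib_right[symmetric] g_P[OF x] mult.assoc[symmetric])
  have t9: "(\<Sum>k\<in>UNIV. \<Sum>l\<in>UNIV. (g x $ j $ l * P k x) * (g x $ k $ i * P l x)) = ?pi * ?pj"
  proof -
    have "(\<Sum>k\<in>UNIV. \<Sum>l\<in>UNIV. (g x $ j $ l * P k x) * (g x $ k $ i * P l x))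
       = (\<Sum>k\<in>UNIV. (g x $ k $ i * P k x) * (\<Sum>l\<in>UNIV. g x $ j $ l * P l x))"
      by (simp add: sum_distrib_left algebra_simps)
    also have "\<dots> = ?pi * ?pj" by (simp add: g_P[OF x] gP sum_distrib_right[symmetric])
    finally show ?thesis .
  qed
  show ?thesis unfolding split t1 t2 t3 t4 t5 t6 t7 t8 t9 by (simp add: algebra_simps)
qed

end

lemma swap3: "(\<Sum>l\<in>S. \<Sum>a\<in>T. \<Sum>b\<in>R. F l a b) = (\<Sum>a\<in>T. \<Sum>b\<in>R. \<Sum>l\<in>S. F l a b)"
proof -
  have "(\<Sum>l\<in>S. \<Sum>a\<in>T. \<Sum>b\<in>R. F l a b) = (\<Sum>a\<in>T. \<Sum>l\<in>S. \<Sum>b\<in>R. F l a b)" by (rule sum.swap)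
  also have "\<dots> = (\<Sum>a\<in>T. \<Sum>b\<in>R. \<Sum>l\<in>S. F l a b)" by (rule sum.cong[OF refl], rule sum.swap)
  finally show ?thesis .
qed

lemma tri: "(\<Sum>l\<in>S. (\<Sum>a\<in>S. (A a::real) * (\<Sum>b\<in>S. B a b * C b l)) * E l)
   = (\<Sum>a\<in>S. A a * (\<Sum>b\<in>S. B a b * (\<Sum>l\<in>S. C b l * E l)))"
proof -
  have L: "(\<Sum>l\<in>S. (\<Sum>a\<in>S. A a * (\<Sum>b\<in>S. B a b * C b l)) * E l) = (\<Sum>l\<in>S. \<Sum>a\<in>S. \<Sum>b\<in>S. A a * (B a b * (C b l * E l)))"
    by (simp add: sum_distrib_left sum_distrib_right mult.assoc)
  have R: "(\<Sum>a\<in>S. A a * (\<Sum>b\<in>S. B a b * (\<Sum>l\<in>S. C b l * E l))) = (\<Sum>a\<in>S. \<Sum>b\<in>S. \<Sum>l\<in>S. A a * (B a b * (C b l * E l)))"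
    by (simp add: sum_distrib_left sum_distrib_right mult.assoc)
  show ?thesis unfolding L R by (rule swap3)
qed

lemma swap2f: "(\<Sum>m\<in>S. (\<Sum>b\<in>S. (A m b::real) * Y b) * E m) = (\<Sum>b\<in>S. (\<Sum>m\<in>S. A m b * E m) * Y b)"
proof -
  have "(\<Sum>m\<in>S. (\<Sum>b\<in>S. A m b * Y b) * E m) = (\<Sum>m\<in>S. \<Sum>b\<in>S. A m b * E m * Y b)"
    by (simp add: sum_distrib_right sum_distrib_left algebra_simps)
  also have "\<dots> = (\<Sum>b\<in>S. \<Sum>m\<in>S. A m b * E m * Y b)" by (rule sum.swap)
  also have "\<dots> = (\<Sum>b\<in>S. (\<Sum>m\<in>S. A m b * E m) * Y b)" by (simp add: sum_distrib_right)
  finally show ?thesis .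
qed


lemma lin3a: "(\<Sum>k\<in>S. \<Sum>l\<in>S. (G k l::real) * ((1/2) * (A k l + B k l - C k l))) = (1/2) * ((\<Sum>k\<in>S. \<Sum>l\<in>S. G k l * A k l) + (\<Sum>k\<in>S. \<Sum>l\<in>S. G k l * B k l) - (\<Sum>k\<in>S. \<Sum>l\<in>S. G k l * C k l))"
  by (simp add: sum.distrib sum_subtractf sum_distrib_left ring_distribs mult.left_commute)

context conf begin

lemma CP_eq: "x \<in> U \<Longrightarrow> CP k l x = (1/2) * (\<Sum>b\<in>UNIV. P b x *
   (pd k (\<lambda>y. g y $ l $ b) x + pd l (\<lambda>y. g y $ k $ b) x - pd b (\<lambda>y. g y $ k $ l) x))"
proof -
  assume x: "x \<in> U"
  have "CP k l x = (\<Sum>m\<in>UNIV. (\<Sum>b\<in>UNIV. ginv g x m b * ((1/2) *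
   (pd k (\<lambda>y. g y $ l $ b) x + pd l (\<lambda>y. g y $ k $ b) x - pd b (\<lambda>y. g y $ k $ l) x))) * pd m \<phi> x)"
    unfolding CP_def christ_def by (simp add: sum_distrib_left algebra_simps)
  also have "\<dots> = (\<Sum>b\<in>UNIV. (\<Sum>m\<in>UNIV. ginv g x m b * pd m \<phi> x) * ((1/2) *
   (pd k (\<lambda>y. g y $ l $ b) x + pd l (\<lambda>y. g y $ k $ b) x - pd b (\<lambda>y. g y $ k $ l) x)))"
    by (rule swap2f)
  also have "\<dots> = (\<Sum>b\<in>UNIV. (\<Sum>m\<in>UNIV. ginv g x b m * pd m \<phi> x) * ((1/2) *
   (pd k (\<lambda>y. g y $ l $ b) x + pd l (\<lambda>y. g y $ k $ b) x - pd b (\<lambda>y. g y $ k $ l) x)))"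
  proof (rule sum.cong[OF refl])
    fix b
    have "(\<Sum>m\<in>UNIV. ginv g x m b * pd m \<phi> x) = (\<Sum>m\<in>UNIV. ginv g x b m * pd m \<phi> x)"
      by (rule sum.cong[OF refl]) (simp only: ginv_sym[OF met x, of _ b])
    then show "(\<Sum>m\<in>UNIV. ginv g x m b * pd m \<phi> x) * ((1/2) *
   (pd k (\<lambda>y. g y $ l $ b) x + pd l (\<lambda>y. g y $ k $ b) x - pd b (\<lambda>y. g y $ k $ l) x)) = (\<Sum>m\<in>UNIV. ginv g x b m * pd m \<phi> x) * ((1/2) *
   (pd k (\<lambda>y. g y $ l $ b) x + pd l (\<lambda>y. g y $ k $ b) x - pd b (\<lambda>y. g y $ k $ l) x))"
      by (rule arg_cong)
  qed
  also have "\<dots> = (1/2) * (\<Sum>b\<in>UNIV. P b x *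
   (pd k (\<lambda>y. g y $ l $ b) x + pd l (\<lambda>y. g y $ k $ b) x - pd b (\<lambda>y. g y $ k $ l) x))"
    unfolding P_def by (simp add: sum_distrib_left sum_divide_distrib algebra_simps)
  finally show ?thesis .
qed


lemma Div: "x \<in> U \<Longrightarrow> (\<Sum>k\<in>UNIV. pd k (P k) x) = lap g \<phi> x - (\<Sum>a\<in>UNIV. GG a x * P a x)"
proof -
  assume x: "x \<in> U"
  define X where "X = (\<Sum>k\<in>UNIV. \<Sum>a\<in>UNIV. ginv g x k a * (\<Sum>b\<in>UNIV. pd k (\<lambda>y. g y $ a $ b) x * P b x))"
  have s0: "(\<Sum>k\<in>UNIV. pd k (P k) x) = (\<Sum>k\<in>UNIV. \<Sum>l\<in>UNIV. pd k (\<lambda>y. ginv g y k l) x * pd l \<phi> x)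
     + (\<Sum>k\<in>UNIV. \<Sum>l\<in>UNIV. ginv g x k l * pd k (pd l \<phi>) x)"
    by (simp add: pd_P[OF x] sum.distrib)
  have lapx: "lap g \<phi> x = (\<Sum>k\<in>UNIV. \<Sum>l\<in>UNIV. ginv g x k l * pd k (pd l \<phi>) x)
     - (\<Sum>k\<in>UNIV. \<Sum>l\<in>UNIV. ginv g x k l * CP k l x)"
    unfolding lap_def hess_def CP_def by (simp add: right_diff_distrib sum_subtractf)
  have i: "(\<Sum>k\<in>UNIV. \<Sum>l\<in>UNIV. pd k (\<lambda>y. ginv g y k l) x * pd l \<phi> x) = - X"
  proof -
    have "\<And>k. (\<Sum>l\<in>UNIV. pd k (\<lambda>y. ginv g y k l) x * pd l \<phi> x) =
       - (\<Sum>a\<in>UNIV. ginv g x k a * (\<Sum>b\<in>UNIV. pd k (\<lambda>y. g y $ a $ b) x * (\<Sum>l\<in>UNIV. ginv g x b l * pd l \<phi> x)))"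
    proof -
      fix k
      have "(\<Sum>l\<in>UNIV. pd k (\<lambda>y. ginv g y k l) x * pd l \<phi> x) =
         - (\<Sum>l\<in>UNIV. (\<Sum>a\<in>UNIV. ginv g x k a * (\<Sum>b\<in>UNIV. pd k (\<lambda>y. g y $ a $ b) x * ginv g x b l)) * pd l \<phi> x)"
        by (simp add: pd_ginv[OF x] sum_negf)
      then show "?thesis k" by (simp only: tri)
    qed
    then show ?thesis unfolding X_def P_def by (simp add: sum_negf)
  qed
  have T1: "(\<Sum>k\<in>UNIV. \<Sum>l\<in>UNIV. ginv g x k l * (\<Sum>b\<in>UNIV. P b x * pd k (\<lambda>y. g y $ l $ b) x)) = X"
    unfolding X_def by (simp add: mult.commute)
  have T2: "(\<Sum>k\<in>UNIV. \<Sum>l\<in>UNIV. ginv g x k l * (\<Sum>b\<in>UNIV. P b x * pd l (\<lambda>y. g y $ k $ b) x)) = X"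
  proof -
    have "(\<Sum>k\<in>UNIV. \<Sum>l\<in>UNIV. ginv g x k l * (\<Sum>b\<in>UNIV. P b x * pd l (\<lambda>y. g y $ k $ b) x))
      = (\<Sum>l\<in>UNIV. \<Sum>k\<in>UNIV. ginv g x k l * (\<Sum>b\<in>UNIV. P b x * pd l (\<lambda>y. g y $ k $ b) x))"
      by (rule sum.swap)
    also have "\<dots> = (\<Sum>l\<in>UNIV. \<Sum>k\<in>UNIV. ginv g x l k * (\<Sum>b\<in>UNIV. P b x * pd l (\<lambda>y. g y $ k $ b) x))"
      by (intro sum.cong refl) (simp only: ginv_sym[OF met x, of _ l for l])
    finally show ?thesis using T1 by simp
  qed
  have T3: "(\<Sum>k\<in>UNIV. \<Sum>l\<in>UNIV. ginv g x k l * (\<Sum>b\<in>UNIV. P b x * pd b (\<lambda>y. g y $ k $ l) x))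
      = 2 * (\<Sum>b\<in>UNIV. GG b x * P b x)"
  proof -
    have "(\<Sum>k\<in>UNIV. \<Sum>l\<in>UNIV. ginv g x k l * (\<Sum>b\<in>UNIV. P b x * pd b (\<lambda>y. g y $ k $ l) x))
       = (\<Sum>k\<in>UNIV. \<Sum>l\<in>UNIV. \<Sum>b\<in>UNIV. P b x * (ginv g x k l * pd b (\<lambda>y. g y $ k $ l) x))"
      by (simp add: sum_distrib_left algebra_simps)
    also have "\<dots> = (\<Sum>b\<in>UNIV. \<Sum>k\<in>UNIV. \<Sum>l\<in>UNIV. P b x * (ginv g x k l * pd b (\<lambda>y. g y $ k $ l) x))"
      by (rule swap3[symmetric])
    also have "\<dots> = (\<Sum>b\<in>UNIV. P b x * (2 * GG b x))"
      by (simp add: GG_eq[OF x] sum_distrib_left)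
    finally show ?thesis by (simp add: sum_distrib_left algebra_simps)
  qed
  have ii: "(\<Sum>k\<in>UNIV. \<Sum>l\<in>UNIV. ginv g x k l * CP k l x) = X - (\<Sum>b\<in>UNIV. GG b x * P b x)"
  proof -
    have "(\<Sum>k\<in>UNIV. \<Sum>l\<in>UNIV. ginv g x k l * CP k l x) = (1/2) * (
        (\<Sum>k\<in>UNIV. \<Sum>l\<in>UNIV. ginv g x k l * (\<Sum>b\<in>UNIV. P b x * pd k (\<lambda>y. g y $ l $ b) x))
      + (\<Sum>k\<in>UNIV. \<Sum>l\<in>UNIV. ginv g x k l * (\<Sum>b\<in>UNIV. P b x * pd l (\<lambda>y. g y $ k $ b) x))
      - (\<Sum>k\<in>UNIV. \<Sum>l\<in>UNIV. ginv g x k l * (\<Sum>b\<in>UNIV. P b x * pd b (\<lambda>y. g y $ k $ l) x)))"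
    proof -
      have cp: "\<And>k l. CP k l x = (1/2) * ((\<Sum>b\<in>UNIV. P b x * pd k (\<lambda>y. g y $ l $ b) x)
         + (\<Sum>b\<in>UNIV. P b x * pd l (\<lambda>y. g y $ k $ b) x) - (\<Sum>b\<in>UNIV. P b x * pd b (\<lambda>y. g y $ k $ l) x))"
        by (simp only: CP_eq[OF x] ring_distribs sum.distrib sum_subtractf)
      show ?thesis unfolding cp by (rule lin3a)
    qed
    then show ?thesis unfolding T1 T2 T3 by simp
  qed
  show ?thesis unfolding s0 lapx i ii by simp
qed

end

lemma quad: "(\<Sum>k\<in>S. \<Sum>l\<in>S. (a k l + b k l) * (c k l + d k l) - (e k l + f k l) * (p k l + q k l)) =
   (\<Sum>k\<in>S. \<Sum>l\<in>S. (a k l::real) * c k l - e k l * p k l) + (\<Sum>k\<in>S. \<Sum>l\<in>S. a k l * d k l)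
   + (\<Sum>k\<in>S. \<Sum>l\<in>S. b k l * c k l) + (\<Sum>k\<in>S. \<Sum>l\<in>S. b k l * d k l)
   - (\<Sum>k\<in>S. \<Sum>l\<in>S. e k l * q k l) - (\<Sum>k\<in>S. \<Sum>l\<in>S. f k l * p k l) - (\<Sum>k\<in>S. \<Sum>l\<in>S. f k l * q k l)"
  by (simp add: sum.distrib sum_subtractf ring_distribs algebra_simps)

context conf begin

lemma pd_christ_gt: "x \<in> U \<Longrightarrow> pd l (christ gt k i j) x = pd l (christ g k i j) x + pd l (D k i j) x"
proof -
  assume x: "x \<in> U"
  have "pd l (christ gt k i j) x = pd l (\<lambda>y. christ g k i j y + D k i j y) x"
    by (rule pd_cong[OF U x]) (simp add: christ_gt)
  also have "\<dots> = pd l (christ g k i j) x + pd l (D k i j) x"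
    by (rule pd_add) (use x christ_d D_d in auto)
  finally show ?thesis .
qed

lemma ricci_gt: "x \<in> U \<Longrightarrow> ricci gt i j x = ricci g i j x
   - (real CARD('n) - 2) * (hess g \<phi> i j x - pd i \<phi> x * pd j \<phi> x)
   - (lap g \<phi> x + (real CARD('n) - 2) * gip g \<phi> \<phi> x) * g x $ i $ j"
proof -
  assume x: "x \<in> U"
  let ?n = "real CARD('n)"
  have q: "(\<Sum>k\<in>UNIV. \<Sum>l\<in>UNIV. christ gt k k l x * christ gt l i j x - christ gt k j l x * christ gt l k i x)
    = (\<Sum>k\<in>UNIV. \<Sum>l\<in>UNIV. christ g k k l x * christ g l i j x - christ g k j l x * christ g l k i x)
    + (\<Sum>k\<in>UNIV. \<Sum>l\<in>UNIV. christ g k k l x * D l i j x)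
    + (\<Sum>k\<in>UNIV. \<Sum>l\<in>UNIV. D k k l x * christ g l i j x)
    + (\<Sum>k\<in>UNIV. \<Sum>l\<in>UNIV. D k k l x * D l i j x)
    - (\<Sum>k\<in>UNIV. \<Sum>l\<in>UNIV. christ g k j l x * D l k i x)
    - (\<Sum>k\<in>UNIV. \<Sum>l\<in>UNIV. D k j l x * christ g l k i x)
    - (\<Sum>k\<in>UNIV. \<Sum>l\<in>UNIV. D k j l x * D l k i x)"
    unfolding christ_gt[OF x] by (rule quad)
  have p1: "(\<Sum>k\<in>UNIV. pd k (christ gt k i j) x) = (\<Sum>k\<in>UNIV. pd k (christ g k i j) x) + (\<Sum>k\<in>UNIV. pd k (D k i j) x)"
    by (simp add: pd_christ_gt[OF x] sum.distrib)
  have p2: "(\<Sum>k\<in>UNIV. pd j (christ gt k k i) x) = (\<Sum>k\<in>UNIV. pd j (christ g k k i) x) + (\<Sum>k\<in>UNIV. pd j (D k k i) x)"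
    by (simp add: pd_christ_gt[OF x] sum.distrib)
  have main: "ricci gt i j x = ricci g i j x
     + (pd j (pd i \<phi>) x + pd i (pd j \<phi>) x - (\<Sum>k\<in>UNIV. pd k (\<lambda>y. g y $ i $ j) x * P k x)
        - g x $ i $ j * (lap g \<phi> x - (\<Sum>a\<in>UNIV. GG a x * P a x)))
     - ?n * pd j (pd i \<phi>) x
     + (GG j x * pd i \<phi> x + GG i x * pd j \<phi> x - g x $ i $ j * (\<Sum>l\<in>UNIV. GG l x * P l x))
     + ?n * CP i j x
     + ?n * (2 * pd i \<phi> x * pd j \<phi> x - g x $ i $ j * gip g \<phi> \<phi> x)
     - (CP j i x + pd i \<phi> x * GG j x - (\<Sum>k\<in>UNIV. \<Sum>l\<in>UNIV. christ g k j l x * g x $ k $ i * P l x))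
     - (pd j \<phi> x * GG i x + CP j i x - (\<Sum>k\<in>UNIV. \<Sum>l\<in>UNIV. g x $ j $ l * P k x * christ g l k i x))
     - ((?n + 2) * pd i \<phi> x * pd j \<phi> x - 2 * g x $ i $ j * gip g \<phi> \<phi> x)"
    unfolding ricci_def[of gt] q p1 p2 R2[OF x] R3[OF x] Div[OF x] Ta Tb[OF x] Tc[OF x] Td[OF x] Te[OF x] Tf[OF x]
    by (simp add: ricci_def)
  have sym: "(\<Sum>k\<in>UNIV. \<Sum>l\<in>UNIV. g x $ j $ l * P k x * christ g l k i x) =
     (\<Sum>l\<in>UNIV. pd l (\<lambda>y. g y $ i $ j) x * P l x) - (\<Sum>k\<in>UNIV. \<Sum>l\<in>UNIV. christ g k j l x * g x $ k $ i * P l x)"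
    using Sym[OF x, of j i] by simp
  have cl: "pd j (pd i \<phi>) x = pd i (pd j \<phi>) x" using clairaut[OF U x sm] by simp
  have cps: "CP j i x = CP i j x" unfolding CP_def using christ_sym[OF x] by simp
  have hs: "hess g \<phi> i j x = pd i (pd j \<phi>) x - CP i j x" unfolding hess_def CP_def ..
  show ?thesis unfolding main sym cl cps hs by (simp add: algebra_simps)
qed

end

context conf begin

lemma P_gip: "(\<Sum>k\<in>UNIV. P k x * pd k u x) = gip g u \<phi> x"
  unfolding P_def gip_def by (simp add: sum_distrib_right sum_distrib_left algebra_simps)

lemma hess_gt: "x \<in> U \<Longrightarrow> hess gt u i j x = hess g u i j x - pd i \<phi> x * pd j u x - pd j \<phi> x * pd i u x
   + g x $ i $ j * gip g u \<phi> x"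
proof -
  assume x: "x \<in> U"
  have "hess gt u i j x = hess g u i j x - (\<Sum>k\<in>UNIV. D k i j x * pd k u x)"
    unfolding hess_def christ_gt[OF x] by (simp add: ring_distribs sum.distrib)
  also have "(\<Sum>k\<in>UNIV. D k i j x * pd k u x) = pd i \<phi> x * pd j u x + pd j \<phi> x * pd i u x
     - g x $ i $ j * (\<Sum>k\<in>UNIV. P k x * pd k u x)"
    unfolding D_def by (simp add: ring_distribs sum.distrib sum_subtractf sum_distrib_left algebra_simps)
  finally show ?thesis unfolding P_gip by simp
qed

lemma trace_g: "x \<in> U \<Longrightarrow> (\<Sum>i\<in>UNIV. \<Sum>j\<in>UNIV. ginv g x i j * g x $ i $ j) = real CARD('n)"
  using ginv_g'[of x] by simp

lemma gip_sym: "x \<in> U \<Longrightarrow> gip g a b x = gip g b a x"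
  unfolding gip_def
  by (subst sum.swap) (simp add: ginv_sym[OF met, of x] algebra_simps)

lemma lap_gt: "x \<in> U \<Longrightarrow> lap gt u x = exp (- 2 * \<phi> x) * (lap g u x + (real CARD('n) - 2) * gip g u \<phi> x)"
proof -
  assume x: "x \<in> U"
  have "lap gt u x = exp (- 2 * \<phi> x) * (\<Sum>i\<in>UNIV. \<Sum>j\<in>UNIV. ginv g x i j *
     (hess g u i j x - pd i \<phi> x * pd j u x - pd j \<phi> x * pd i u x + g x $ i $ j * gip g u \<phi> x))"
    unfolding lap_def by (simp add: hess_gt[OF x] ginv_gt[OF x] sum_distrib_left mult.assoc)
  also have "(\<Sum>i\<in>UNIV. \<Sum>j\<in>UNIV. ginv g x i j *
     (hess g u i j x - pd i \<phi> x * pd j u x - pd j \<phi> x * pd i u x + g x $ i $ j * gip g u \<phi> x))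
     = lap g u x - gip g \<phi> u x - gip g u \<phi> x + (\<Sum>i\<in>UNIV. \<Sum>j\<in>UNIV. ginv g x i j * g x $ i $ j) * gip g u \<phi> x"
    unfolding lap_def gip_def
    by (simp add: ring_distribs sum.distrib sum_subtractf sum_distrib_right algebra_simps)
  finally show ?thesis unfolding trace_g[OF x] gip_sym[OF x, of \<phi> u] by (simp add: algebra_simps)
qed

end

context conf begin

lemma ephi_d: "y \<in> U \<Longrightarrow> (\<lambda>y. exp (\<phi> y)) differentiable (at y)"
  by (intro exp_diff phi_d0)

lemma pd_u1:
  assumes V: "smooth_on U V" and y: "y \<in> U"
  shows "pd j (\<lambda>y. exp (\<phi> y) * V y) y = exp (\<phi> y) * (pd j \<phi> y * V y + pd j V y)"
  using pd_mult[OF ephi_d[OF y] smooth_diff0[OF V y], of j] pd_exp[OF phi_d0[OF y], of j]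
  by (simp add: algebra_simps)

lemma pd_u2:
  assumes V: "smooth_on U V" and x: "x \<in> U"
  shows "pd i (pd j (\<lambda>y. exp (\<phi> y) * V y)) x = exp (\<phi> x) * (pd i \<phi> x * (pd j \<phi> x * V x + pd j V x)
     + pd i (pd j \<phi>) x * V x + pd j \<phi> x * pd i V x + pd i (pd j V) x)"
proof -
  have dV: "\<And>y. y \<in> U \<Longrightarrow> V differentiable (at y)" using smooth_diff0[OF V] .
  have dV1: "\<And>y. y \<in> U \<Longrightarrow> pd j V differentiable (at y)" using smooth_diff1[OF V] .
  have "pd i (pd j (\<lambda>y. exp (\<phi> y) * V y)) x = pd i (\<lambda>y. exp (\<phi> y) * (pd j \<phi> y * V y + pd j V y)) x"
    by (rule pd_cong[OF U x]) (simp add: pd_u1[OF V])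
  also have "\<dots> = pd i (\<lambda>y. exp (\<phi> y)) x * (pd j \<phi> x * V x + pd j V x)
       + exp (\<phi> x) * pd i (\<lambda>y. pd j \<phi> y * V y + pd j V y) x"
    by (rule pd_mult) (use x ephi_d phi_d1 dV dV1 in auto)
  also have "pd i (\<lambda>y. pd j \<phi> y * V y + pd j V y) x = pd i (\<lambda>y. pd j \<phi> y * V y) x + pd i (pd j V) x"
    using pd_add[of "\<lambda>y. pd j \<phi> y * V y" x "pd j V" i] x phi_d1 dV dV1 by auto
  also have "pd i (\<lambda>y. pd j \<phi> y * V y) x = pd i (pd j \<phi>) x * V x + pd j \<phi> x * pd i V x"
    by (rule pd_mult) (use x phi_d1 dV in auto)
  also have "pd i (\<lambda>y. exp (\<phi> y)) x = exp (\<phi> x) * pd i \<phi> x"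
    by (rule pd_exp[OF phi_d0[OF x]])
  finally show ?thesis by (simp add: algebra_simps)
qed

lemma hess_u:
  assumes V: "smooth_on U V" and x: "x \<in> U"
  shows "hess g (\<lambda>y. exp (\<phi> y) * V y) i j x = exp (\<phi> x) * (hess g V i j x + V x * hess g \<phi> i j x
     + V x * pd i \<phi> x * pd j \<phi> x + pd i \<phi> x * pd j V x + pd j \<phi> x * pd i V x)"
  unfolding hess_def pd_u2[OF V x] pd_u1[OF V x]
  by (simp add: ring_distribs sum.distrib sum_distrib_left sum_subtractf algebra_simps)

lemma lap_u:
  assumes V: "smooth_on U V" and x: "x \<in> U"
  shows "lap g (\<lambda>y. exp (\<phi> y) * V y) x = exp (\<phi> x) * (lap g V x + V x * lap g \<phi> x
     + V x * gip g \<phi> \<phi> x + 2 * gip g \<phi> V x)"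
proof -
  have "lap g (\<lambda>y. exp (\<phi> y) * V y) x = exp (\<phi> x) * (lap g V x + V x * lap g \<phi> x
     + V x * gip g \<phi> \<phi> x + gip g \<phi> V x + gip g V \<phi> x)"
    unfolding lap_def hess_u[OF V x] gip_def
    by (simp add: ring_distribs sum.distrib sum_distrib_left algebra_simps)
  then show ?thesis using gip_sym[OF x, of V \<phi>] by simp
qed

lemma gip_u:
  assumes V: "smooth_on U V" and x: "x \<in> U"
  shows "gip g (\<lambda>y. exp (\<phi> y) * V y) \<phi> x = exp (\<phi> x) * (V x * gip g \<phi> \<phi> x + gip g V \<phi> x)"
  unfolding gip_def pd_u1[OF V x]
  by (simp add: ring_distribs sum.distrib sum_distrib_left algebra_simps)

end

lemma smooth_cmult:
  fixes F :: "real^'n::finite \<Rightarrow> real"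
  assumes U: "open U" and sm: "smooth_on U F"
  shows "smooth_on U (\<lambda>y. c * F y)"
proof -
  have eq: "\<forall>y\<in>U. ipd is (\<lambda>y. c * F y) y = c * ipd is F y" for "is"
  proof (induction "is")
    case Nil then show ?case by simp
  next
    case (Cons i "is")
    show ?case
    proof
      fix y assume y: "y \<in> U"
      have "ipd (i # is) (\<lambda>y. c * F y) y = pd i (\<lambda>z. c * ipd is F z) y"
        using pd_cong[OF U y, of "ipd is (\<lambda>y. c * F y)" "\<lambda>z. c * ipd is F z" i] Cons by simp
      also have "\<dots> = c * pd i (ipd is F) y"
        by (rule pd_cmult) (use sm y in \<open>simp add: smooth_on_def\<close>)
      finally show "ipd (i # is) (\<lambda>y. c * F y) y = c * ipd (i # is) F y" by simp
    qed
  qed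
  show ?thesis unfolding smooth_on_def
  proof (intro allI ballI)
    fix "is" y assume y: "y \<in> U"
    show "ipd is (\<lambda>y. c * F y) differentiable (at y)"
      by (rule differentiable_cong[OF U y, of _ "\<lambda>z. c * ipd is F z"])
         (use eq sm y in \<open>auto simp: smooth_on_def\<close>)
  qed
qed

lemma pd2_scale:
  fixes F :: "real^'n::finite \<Rightarrow> real"
  assumes U: "open U" and sm: "smooth_on U F" and x: "x \<in> U"
  shows "pd i (pd j (\<lambda>y. c * F y)) x = c * pd i (pd j F) x"
proof -
  have "pd i (pd j (\<lambda>y. c * F y)) x = pd i (\<lambda>y. c * pd j F y) x"
    by (rule pd_cong[OF U x]) (rule pd_cmult, use sm smooth_diff0 in blast)
  also have "\<dots> = c * pd i (pd j F) x"
    by (rule pd_cmult) (use sm smooth_diff1 x in blast)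
  finally show ?thesis .
qed

lemma pd1_scale:
  fixes F :: "real^'n::finite \<Rightarrow> real"
  assumes sm: "smooth_on U F" and x: "x \<in> U"
  shows "pd i (\<lambda>y. c * F y) x = c * pd i F x"
  by (rule pd_cmult) (use sm smooth_diff0 x in blast)

lemma hess_scale:
  fixes F :: "real^'n::finite \<Rightarrow> real"
  assumes U: "open U" and sm: "smooth_on U F" and x: "x \<in> U"
  shows "hess g (\<lambda>y. c * F y) i j x = c * hess g F i j x"
  unfolding hess_def pd2_scale[OF U sm x] pd1_scale[OF sm x]
  by (simp add: sum_distrib_left algebra_simps)

lemma lap_scale:
  fixes F :: "real^'n::finite \<Rightarrow> real"
  assumes U: "open U" and sm: "smooth_on U F" and x: "x \<in> U"
  shows "lap g (\<lambda>y. c * F y) x = c * lap g F x"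
  unfolding lap_def hess_scale[OF U sm x]
  by (simp add: sum_distrib_left algebra_simps)

lemma gip_scale1:
  fixes F :: "real^'n::finite \<Rightarrow> real"
  assumes sm: "smooth_on U F" and x: "x \<in> U"
  shows "gip g (\<lambda>y. c * F y) B x = c * gip g F B x"
  unfolding gip_def pd1_scale[OF sm x]
  by (simp add: sum_distrib_left algebra_simps)

lemma gip_scale2:
  fixes F :: "real^'n::finite \<Rightarrow> real"
  assumes sm: "smooth_on U F" and x: "x \<in> U"
  shows "gip g A (\<lambda>y. c * F y) x = c * gip g A F x"
  unfolding gip_def pd1_scale[OF sm x]
  by (simp add: sum_distrib_left algebra_simps)

theorem lemma3p2:
  fixes U :: "(real^'n::finite) set"
    and g :: "real^'n \<Rightarrow> real^'n^'n"
    and f V :: "real^'n \<Rightarrow> real"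
  assumes "CARD('n) \<ge> 3"
    and "open U"
    and "riem_metric_on U g"
    and "smooth_on U f" and "smooth_on U V"
  defines "gt \<equiv> (\<lambda>x. exp (- 2 / (real CARD('n) - 1) * f x) *\<^sub>R g x)"
    and "u \<equiv> (\<lambda>x. exp (- f x / (real CARD('n) - 1)) * V x)"
  shows "\<forall>x\<in>U.
      lap gt u x = exp (f x / (real CARD('n) - 1)) *
          ((1/2) * Fstar_f g f V x + (1/2) * V x * Sf g f x)
    \<and> (\<forall>i j. hess gt u i j x - u x * ricci gt i j x =
          exp (- f x / (real CARD('n) - 1)) *
          (Fstar_g g f V i j x + (1/2) * Fstar_f g f V x * g x $ i $ j))"
proof
  fix x assume x: "x \<in> U"
  let ?N = "real CARD('n)"
  define c where "c = - 1 / (?N - 1)"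
  have N1: "?N - 1 > 0" using assms(1) by simp
  define \<phi> where "\<phi> = (\<lambda>y. c * f y)"
  have smp: "smooth_on U \<phi>" unfolding \<phi>_def by (rule smooth_cmult[OF assms(2,4)])
  interpret C: conf U g \<phi> by unfold_locales (use assms(2,3) smp in auto)
  have gt_eq: "gt = C.gt"
  proof (rule ext)
    fix y
    have "- 2 / (?N - 1) * f y = 2 * \<phi> y" unfolding \<phi>_def c_def by (simp add: field_simps)
    then show "gt y = C.gt y" unfolding gt_def C.gt_def by simp
  qed
  have u_eq: "u = (\<lambda>y. exp (\<phi> y) * V y)"
    unfolding u_def \<phi>_def c_def by (rule ext) (simp add: field_simps)
  have p1: "\<And>i. pd i \<phi> x = c * pd i f x" unfolding \<phi>_def by (rule pd1_scale[OF assms(4) x])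
  have h1: "\<And>i j. hess g \<phi> i j x = c * hess g f i j x" unfolding \<phi>_def by (rule hess_scale[OF assms(2,4) x])
  have l1: "lap g \<phi> x = c * lap g f x" unfolding \<phi>_def by (rule lap_scale[OF assms(2,4) x])
  have g1: "gip g \<phi> \<phi> x = c * c * gip g f f x"
    unfolding \<phi>_def gip_scale1[OF assms(4) x] gip_scale2[OF assms(4) x] by simp
  have g2: "gip g V \<phi> x = c * gip g V f x" unfolding \<phi>_def by (rule gip_scale2[OF assms(4) x])
  have g3: "gip g \<phi> V x = c * gip g V f x" using g2 C.gip_sym[OF x, of \<phi> V] by simp
  have e1: "exp (- 2 * \<phi> x) * exp (\<phi> x) = exp (f x / (?N - 1))"
    unfolding exp_add[symmetric] \<phi>_def c_def by (simp add: field_simps)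
  have e2: "exp (\<phi> x) = exp (- f x / (?N - 1))"
    unfolding \<phi>_def c_def by (simp add: field_simps)
  have inv: "(?N - 1) * inverse (?N - 1) = 1" using N1 by simp
  have cinv: "c = - inverse (?N - 1)" by (simp add: c_def divide_inverse)
  show "lap gt u x = exp (f x / (?N - 1)) * ((1/2) * Fstar_f g f V x + (1/2) * V x * Sf g f x)
    \<and> (\<forall>i j. hess gt u i j x - u x * ricci gt i j x =
          exp (- f x / (?N - 1)) * (Fstar_g g f V i j x + (1/2) * Fstar_f g f V x * g x $ i $ j))"
  proof (intro conjI allI)
    have "lap gt u x = exp (- 2 * \<phi> x) * exp (\<phi> x) * (lap g V x + V x * lap g \<phi> x
        + V x * gip g \<phi> \<phi> x + 2 * gip g \<phi> V x + (?N - 2) * (V x * gip g \<phi> \<phi> x + gip g V \<phi> x))"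
      unfolding gt_eq u_eq C.lap_gt[OF x] C.lap_u[OF assms(5) x] C.gip_u[OF assms(5) x]
      by (simp add: algebra_simps)
    also have "\<dots> = exp (f x / (?N - 1)) * ((1/2) * Fstar_f g f V x + (1/2) * V x * Sf g f x)"
      unfolding e1 l1 g1 g2 g3 Fstar_f_def Sf_def cinv divide_inverse
      using inv by algebra
    finally show "lap gt u x = exp (f x / (?N - 1)) * ((1/2) * Fstar_f g f V x + (1/2) * V x * Sf g f x)" .
  next
    fix i j
    have "hess gt u i j x - u x * ricci gt i j x = exp (\<phi> x) * (
        (hess g V i j x + V x * hess g \<phi> i j x + V x * pd i \<phi> x * pd j \<phi> x + pd i \<phi> x * pd j V x + pd j \<phi> x * pd i V x)
        - pd i \<phi> x * (pd j \<phi> x * V x + pd j V x) - pd j \<phi> x * (pd i \<phi> x * V x + pd i V x)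
        + g x $ i $ j * (V x * gip g \<phi> \<phi> x + gip g V \<phi> x)
        - V x * (ricci g i j x - (?N - 2) * (hess g \<phi> i j x - pd i \<phi> x * pd j \<phi> x)
             - (lap g \<phi> x + (?N - 2) * gip g \<phi> \<phi> x) * g x $ i $ j))"
      unfolding gt_eq u_eq C.hess_gt[OF x] C.hess_u[OF assms(5) x] C.gip_u[OF assms(5) x]
        C.ricci_gt[OF x] C.pd_u1[OF assms(5) x]
      by (simp add: algebra_simps)
    also have "\<dots> = exp (- f x / (?N - 1)) * (Fstar_g g f V i j x + (1/2) * Fstar_f g f V x * g x $ i $ j)"
      unfolding e2 h1 l1 g1 g2 p1 Fstar_f_def Fstar_g_def Sf_def cinv divide_inverse
      using inv by algebra
    finally show "hess gt u i j x - u x * ricci gt i j x =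
          exp (- f x / (?N - 1)) * (Fstar_g g f V i j x + (1/2) * Fstar_f g f V x * g x $ i $ j)" .
  qed
qed


end
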